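(* Assume the symmetric interference model with types with type partition $\Pi$ whose parts have sizes divisible by $r$, fix $K>0$, let $\mathcal P$ be any partition of $V(G)$ into sets of size $r$ each contained in a single part of $\Pi$, and let $T=T_{\vec B,\mathcal P}$. Then $$\sqrt{\mathbb E_{\vec B}\Big[\Big(\sum_{\pi\in\Pi}\|D^\pi_T\|_{W,\pi}\Big)^2\Big]}\le\frac1{rn}\sum_{v\in V(G)}\frac{4K}{\sqrt{d(v)}}+\frac K{pqn}\sum_{v\in V(G)}\frac{|\mathcal P_v\cap\mathcal N(v)|}{d(v)}.$$ If moreover $|f_\pi(u)-f_\pi(u')|\le \mathbf d(u,u')$ for all $\pi\in\Pi$ and $u,u'\in\mathcal B_\pi$, then $\sqrt{\mathbb E_{\vec B}\xi^2}$ is bounded by the same right-hand side.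
   Context: Let $n,p,q$ be positive integers, $r=p+q$, $G$ a finite simple graph with $|V(G)|=rn$, no isolated vertices; $\mathcal N(v)$, $d(v)$ neighbor set and degree. For each $v$, $x_v,t_v\in\mathbb R$ and $f_v:2^{\mathcal N(v)}\to\mathbb R$, $f_v(\emptyset)=0$. $\sigma_T(v)=q$ if $v\in T$, $-p$ otherwise; for $|T|=pn$, $\xi=\frac1{pqn}\sum_v\sigma_T(v)f_v(T\cap\mathcal N(v))$. Symmetric interference model with types: $\Pi$ partition of $V(G)$, $\Pi(v)$ the part containing $v$, $\mathcal B_\pi=\{(a,b)\in\mathbb Z^2_{\ge0}:a+b=d(v)\text{ for some }v\in\pi\}$, $f_\pi:\mathcal B_\pi\to\mathbb R$, $f_v(S)=f_{\Pi(v)}(|S|,|\mathcal N(v)\setminus S|)$. Restricted randomization: for $\mathcal P=(S_1,\dots,S_n)$, $S_i=\{w_i^1,\dots,w_i^r\}$, $B_i$ i.i.d. uniform $p$-subsets of $\{1,\dots,r\}$, $T_{\vec B,\mathcal P}=\{w_i^j:j\in B_i\}$; $\mathcal P_v$ is the block containing $v$. $\vec d_T(v)=(|T\cap\mathcal N(v)|,|\mathcal N(v)\setminus T|)$; for $\pi$ with $|T\cap\pi|=p|\pi|/r$, $D^\pi_T=\frac1{pqn}\sum_{v\in\pi}\sigma_T(v)\delta_{\vec d_T(v)}$, a signed measure on $\mathcal B_\pi$ of total mass 0. On $\mathcal B_\pi$ use $\mathbf d((a,b),(c,d))=K\left|\frac a{a+b}-\frac c{c+d}\right|$, and $\|D\|_{W,\pi}=\sup\{|\sum_{u}g(u)D(u)|:g:\mathcal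 B_\pi\to\mathbb R,\ |g(u)-g(u')|\le\mathbf d(u,u')\ \forall u,u'\}$. *)

theory Defs
  imports "HOL-Analysis.Analysis" "HOL-Library.Disjoint_Sets"
begin

definition nbr :: "'v set \<Rightarrow> ('v \<Rightarrow> 'v \<Rightarrow> bool) \<Rightarrow> 'v \<Rightarrow> 'v set" where
  "nbr V E v = {u \<in> V. E v u}"

definition deg :: "'v set \<Rightarrow> ('v \<Rightarrow> 'v \<Rightarrow> bool) \<Rightarrow> 'v \<Rightarrow> nat" where
  "deg V E v = card (nbr V E v)"

definition sgnT :: "nat \<Rightarrow> nat \<Rightarrow> 'v set \<Rightarrow> 'v \<Rightarrow> real" where
  "sgnT p q T v = (if v \<in> T then real q else - real p)"

definition dvec :: "'v set \<Rightarrow> ('v \<Rightarrow> 'v \<Rightarrow> bool) \<Rightarrow> 'v set \<Rightarrow> 'v \<Rightarrow> nat \<times> nat" where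
  "dvec V E T v = (card (T \<inter> nbr V E v), card (nbr V E v - T))"

definition Bset :: "'v set \<Rightarrow> ('v \<Rightarrow> 'v \<Rightarrow> bool) \<Rightarrow> 'v set \<Rightarrow> (nat \<times> nat) set" where
  "Bset V E \<pi> = {(a, b). \<exists>v\<in>\<pi>. a + b = deg V E v}"

definition wdist :: "real \<Rightarrow> nat \<times> nat \<Rightarrow> nat \<times> nat \<Rightarrow> real" where
  "wdist K u u' = K * \<bar>real (fst u) / (real (fst u) + real (snd u))
                        - real (fst u') / (real (fst u') + real (snd u'))\<bar>"

text \<open>The signed measure D^pi_T on B_pi, given by its point masses.\<close>
definition Dpi :: "'v set \<Rightarrow> ('v \<Rightarrow> 'v \<Rightarrow> bool) \<Rightarrow> nat \<Rightarrow> nat \<Rightarrow> nat \<Rightarrow> 'v set \<Rightarrow> 'v set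
                   \<Rightarrow> nat \<times> nat \<Rightarrow> real" where
  "Dpi V E p q n \<pi> T u =
     (1 / (real p * real q * real n)) * (\<Sum>v\<in>{v \<in> \<pi>. dvec V E T v = u}. sgnT p q T v)"

definition wnorm :: "'v set \<Rightarrow> ('v \<Rightarrow> 'v \<Rightarrow> bool) \<Rightarrow> real \<Rightarrow> 'v set \<Rightarrow> (nat \<times> nat \<Rightarrow> real) \<Rightarrow> real" where
  "wnorm V E K \<pi> D =
     Sup {\<bar>\<Sum>u\<in>Bset V E \<pi>. g u * D u\<bar> | g :: nat \<times> nat \<Rightarrow> real.
            \<forall>u\<in>Bset V E \<pi>. \<forall>u'\<in>Bset V E \<pi>. \<bar>g u - g u'\<bar> \<le> wdist K u u'}"

definition part_of :: "'v set set \<Rightarrow> 'v \<Rightarrow> 'v set" where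
  "part_of Parts v = (THE \<pi>. \<pi> \<in> Parts \<and> v \<in> \<pi>)"

text \<open>xi, with f_v(S) = f_{Pi(v)}(|S|, |N(v) - S|)\<close>
definition xi :: "'v set \<Rightarrow> ('v \<Rightarrow> 'v \<Rightarrow> bool) \<Rightarrow> 'v set set \<Rightarrow> ('v set \<Rightarrow> nat \<times> nat \<Rightarrow> real)
                  \<Rightarrow> nat \<Rightarrow> nat \<Rightarrow> nat \<Rightarrow> 'v set \<Rightarrow> real" where
  "xi V E Parts f p q n T =
     (1 / (real p * real q * real n)) *
       (\<Sum>v\<in>V. sgnT p q T v * f (part_of Parts v) (card (T \<inter> nbr V E v), card (nbr V E v - T)))"

text \<open>The blocks are S_i = {w i j | j in {1..r}} for i < n
  (0-based block index). B = (B_0,...,B_{n-1}) ranges over tuples of p-subsets of {1..r},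
  chosen i.i.d. uniformly, i.e. uniformly on the product space.\<close>
definition rr_space :: "nat \<Rightarrow> nat \<Rightarrow> nat \<Rightarrow> (nat \<Rightarrow> nat set) set" where
  "rr_space n p r = PiE {..<n} (\<lambda>_. {B. B \<subseteq> {1..r} \<and> card B = p})"

definition rr_T :: "(nat \<Rightarrow> nat \<Rightarrow> 'v) \<Rightarrow> nat \<Rightarrow> (nat \<Rightarrow> nat set) \<Rightarrow> 'v set" where
  "rr_T w n B = {w i j | i j. i < n \<and> j \<in> B i}"

definition rr_expect :: "nat \<Rightarrow> nat \<Rightarrow> nat \<Rightarrow> ((nat \<Rightarrow> nat set) \<Rightarrow> real) \<Rightarrow> real" where
  "rr_expect n p r g = (\<Sum>B\<in>rr_space n p r. g B) / real (card (rr_space n p r))"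

definition block_of :: "(nat \<Rightarrow> nat \<Rightarrow> 'v) \<Rightarrow> nat \<Rightarrow> nat \<Rightarrow> 'v \<Rightarrow> 'v set" where
  "block_of w r n v = \<Union>{w i ` {1..r} | i. i < n \<and> v \<in> w i ` {1..r}}"

end

theory Submission
  imports Defs
begin

definition ksub :: "'a set \<Rightarrow> nat \<Rightarrow> 'a set set" where
  "ksub R m = {B. B \<subseteq> R \<and> card B = m}"

lemma finite_ksub: "finite R \<Longrightarrow> finite (ksub R m)"
  unfolding ksub_def by (rule finite_subset[of _ "Pow R"]) auto

lemma card_ksub: "finite R \<Longrightarrow> card (ksub R m) = card R choose m"
  unfolding ksub_def by (rule n_subsets)

lemma cnt_sup:
  assumes R: "finite R" and F: "F \<subseteq> R"
  shows "card {B\<in>ksub R m. F \<subseteq> B} =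
     (if card F \<le> m then (card R - card F) choose (m - card F) else 0)"
proof (cases "card F \<le> m")
  case True
  have fF: "finite F" using R F finite_subset by blast
  have "bij_betw (\<lambda>B. B - F) {B\<in>ksub R m. F \<subseteq> B} (ksub (R - F) (m - card F))"
  proof (rule bij_betw_byWitness[where f'="\<lambda>C. C \<union> F"])
    show "\<forall>a\<in>{B \<in> ksub R m. F \<subseteq> B}. a - F \<union> F = a" by auto
    show "\<forall>a'\<in>ksub (R - F) (m - card F). a' \<union> F - F = a'" unfolding ksub_def by auto
    show "(\<lambda>B. B - F) ` {B \<in> ksub R m. F \<subseteq> B} \<subseteq> ksub (R - F) (m - card F)"
    proof
      fix C assume "C \<in> (\<lambda>B. B - F) ` {B \<in> ksub R m. F \<subseteq> B}"
      then obtain B where B: "B \<subseteq> R" "card B = m" "F \<subseteq> B" "C = B - F" unfolding ksub_def by auto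
      have "finite B" using B R finite_subset by blast
      then have "card C = m - card F" using B card_Diff_subset[OF fF B(3)] by simp
      thus "C \<in> ksub (R - F) (m - card F)" using B unfolding ksub_def by auto
    qed
    show "(\<lambda>C. C \<union> F) ` ksub (R - F) (m - card F) \<subseteq> {B \<in> ksub R m. F \<subseteq> B}"
    proof
      fix B assume "B \<in> (\<lambda>C. C \<union> F) ` ksub (R - F) (m - card F)"
      then obtain C where C: "C \<subseteq> R - F" "card C = m - card F" "B = C \<union> F" unfolding ksub_def by auto
      have "finite C" using C R finite_subset by blast
      have "C \<inter> F = {}" using C(1) by auto
      then have "card B = card C + card F" using C(3) card_Un_disjoint[OF \<open>finite C\<close> fF] by simp
      thus "B \<in> {B \<in> ksub R m. F \<subseteq> B}" using C True F unfolding ksub_def by auto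
    qed
  qed
  then have "card {B\<in>ksub R m. F \<subseteq> B} = card (ksub (R - F) (m - card F))" by (rule bij_betw_same_card)
  also have "\<dots> = (card R - card F) choose (m - card F)"
    using R F fF by (simp add: card_ksub card_Diff_subset)
  finally show ?thesis using True by simp
next
  case False
  have e: "{B\<in>ksub R m. F \<subseteq> B} = {}"
  proof (rule ccontr)
    assume "{B\<in>ksub R m. F \<subseteq> B} \<noteq> {}"
    then obtain B where "B \<subseteq> R" "card B = m" "F \<subseteq> B" unfolding ksub_def by auto
    then have "card F \<le> m" using R by (metis card_mono finite_subset)
    thus False using False by simp
  qed
  show ?thesis unfolding e using False by simp
qed

definition c1 :: "nat \<Rightarrow> nat \<Rightarrow> nat" where "c1 N m = (if 1 \<le> m then (N - 1) choose (m - 1) else 0)"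
definition c2 :: "nat \<Rightarrow> nat \<Rightarrow> nat" where "c2 N m = (if 2 \<le> m then (N - 2) choose (m - 2) else 0)"

lemma c1_rel: "N * c1 N m = m * (N choose m)"
  unfolding c1_def using times_binomial_minus1_eq[of m N] by auto

lemma c2_rel: "(N - 1) * c2 N m = (m - 1) * c1 N m"
proof (cases "2 \<le> m")
  case True
  have "(m - 1) * ((N - 1) choose (m - 1)) = (N - 1) * ((N - 1 - 1) choose (m - 1 - 1))"
    using True by (intro times_binomial_minus1_eq) auto
  thus ?thesis using True unfolding c1_def c2_def by (simp add: numeral_2_eq_2 diff_diff_add)
next
  case False
  thus ?thesis unfolding c1_def c2_def by auto
qed

lemma cnt1:
  assumes "finite R" "a \<in> R"
  shows "card {B\<in>ksub R m. a \<in> B} = c1 (card R) m"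
  using cnt_sup[of R "{a}" m] assms unfolding c1_def by auto

lemma cnt2:
  assumes "finite R" "a \<in> R" "b \<in> R" "a \<noteq> b"
  shows "card {B\<in>ksub R m. a \<in> B \<and> b \<in> B} = c2 (card R) m"
  using cnt_sup[of R "{a,b}" m] assms unfolding c2_def by (auto simp: numeral_2_eq_2)

lemma card_as_sum: "finite A \<Longrightarrow> real (card (B \<inter> A)) = (\<Sum>a\<in>A. if a \<in> B then 1 else 0)"
proof -
  assume A: "finite A"
  have "B \<inter> A = {a\<in>A. a \<in> B}" by auto
  then have "real (card (B \<inter> A)) = (\<Sum>a\<in>{a\<in>A. a \<in> B}. 1)" by simp
  also have "\<dots> = (\<Sum>a\<in>A. if a \<in> B then 1 else 0)" using A by (rule sum.inter_filter)
  finally show ?thesis .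
qed

lemma mom1:
  assumes R: "finite R" and A: "A \<subseteq> R"
  shows "(\<Sum>B\<in>ksub R m. real (card (B \<inter> A))) = real (card A) * real (c1 (card R) m)"
proof -
  have fA: "finite A" using R A finite_subset by blast
  have "(\<Sum>B\<in>ksub R m. real (card (B \<inter> A))) = (\<Sum>B\<in>ksub R m. \<Sum>a\<in>A. if a \<in> B then 1 else 0)"
    using fA by (simp add: card_as_sum)
  also have "\<dots> = (\<Sum>a\<in>A. \<Sum>B\<in>ksub R m. if a \<in> B then 1 else 0)" by (rule sum.swap)
  also have "\<dots> = (\<Sum>a\<in>A. real (c1 (card R) m))"
  proof (rule sum.cong[OF refl])
    fix a assume "a \<in> A"
    have "(\<Sum>B\<in>ksub R m. if a \<in> B then 1 else 0) = (\<Sum>B\<in>{B\<in>ksub R m. a \<in> B}. 1::real)"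
      using finite_ksub[OF R] by (rule sum.inter_filter[symmetric])
    also have "\<dots> = real (c1 (card R) m)" using cnt1[OF R] \<open>a \<in> A\<close> A by auto
    finally show "(\<Sum>B\<in>ksub R m. if a \<in> B then 1 else 0) = real (c1 (card R) m)" .
  qed
  finally show ?thesis by simp
qed

lemma mom2:
  assumes R: "finite R" and A: "A \<subseteq> R"
  shows "(\<Sum>B\<in>ksub R m. real (card (B \<inter> A))^2) =
     real (card A) * (real (c1 (card R) m) + real (card A - 1) * real (c2 (card R) m))"
proof -
  have fA: "finite A" using R A finite_subset by blast
  have sq: "real (card (B \<inter> A))^2 = (\<Sum>a\<in>A. \<Sum>b\<in>A. if a \<in> B \<and> b \<in> B then 1 else 0)" for B
  proof -
    have "real (card (B \<inter> A))^2 = (\<Sum>a\<in>A. if a \<in> B then 1 else 0) * (\<Sum>b\<in>A. if b \<in> B then (1::real) else 0)"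
      using fA by (simp add: card_as_sum power2_eq_square)
    also have "\<dots> = (\<Sum>a\<in>A. \<Sum>b\<in>A. (if a \<in> B then 1 else 0) * (if b \<in> B then (1::real) else 0))"
      by (rule sum_product)
    also have "\<dots> = (\<Sum>a\<in>A. \<Sum>b\<in>A. if a \<in> B \<and> b \<in> B then 1 else 0)"
      by (intro sum.cong refl) auto
    finally show ?thesis .
  qed
  have "(\<Sum>B\<in>ksub R m. real (card (B \<inter> A))^2) =
     (\<Sum>B\<in>ksub R m. \<Sum>a\<in>A. \<Sum>b\<in>A. if a \<in> B \<and> b \<in> B then 1 else 0)"
    by (simp only: sq)
  also have "\<dots> = (\<Sum>a\<in>A. \<Sum>B\<in>ksub R m. \<Sum>b\<in>A. if a \<in> B \<and> b \<in> B then 1 else 0)"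
    by (rule sum.swap)
  also have "\<dots> = (\<Sum>a\<in>A. \<Sum>b\<in>A. \<Sum>B\<in>ksub R m. if a \<in> B \<and> b \<in> B then 1 else 0)"
    by (intro sum.cong refl sum.swap)
  also have "\<dots> = (\<Sum>a\<in>A. real (c1 (card R) m) + real (card A - 1) * real (c2 (card R) m))"
  proof (rule sum.cong[OF refl])
    fix a assume a: "a \<in> A"
    have inner: "(\<Sum>B\<in>ksub R m. if a \<in> B \<and> b \<in> B then 1 else 0) =
        (if b = a then real (c1 (card R) m) else real (c2 (card R) m))" if b: "b \<in> A" for b
    proof -
      have "(\<Sum>B\<in>ksub R m. if a \<in> B \<and> b \<in> B then 1 else 0) = (\<Sum>B\<in>{B\<in>ksub R m. a \<in> B \<and> b \<in> B}. 1::real)"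
        using finite_ksub[OF R] by (rule sum.inter_filter[symmetric])
      also have "\<dots> = real (card {B\<in>ksub R m. a \<in> B \<and> b \<in> B})" by simp
      finally show ?thesis using cnt1[OF R, of a m] cnt2[OF R, of a b m] a b A by auto
    qed
    have "(\<Sum>b\<in>A. \<Sum>B\<in>ksub R m. if a \<in> B \<and> b \<in> B then 1 else 0) =
       (\<Sum>b\<in>A. if b = a then real (c1 (card R) m) else real (c2 (card R) m))"
      using inner by (rule sum.cong[OF refl])
    also have "\<dots> = real (c1 (card R) m) + (\<Sum>b\<in>A - {a}. real (c2 (card R) m))"
      using fA a by (simp add: sum.If_cases Int_absorb1 Diff_eq[symmetric] Int_commute)
    also have "\<dots> = real (c1 (card R) m) + real (card A - 1) * real (c2 (card R) m)"
      using fA a by simp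
    finally show "(\<Sum>b\<in>A. \<Sum>B\<in>ksub R m. if a \<in> B \<and> b \<in> B then 1 else 0) =
       real (c1 (card R) m) + real (card A - 1) * real (c2 (card R) m)" .
  qed
  finally show ?thesis by simp
qed

lemma key_S2:
  assumes R: "finite R" and A: "A \<subseteq> R" and mN: "m \<le> card R" and N0: "card R > 0"
  shows "real (card R)^2 * (\<Sum>B\<in>ksub R m. real (card (B \<inter> A))^2)
     \<le> real (card R choose m) * (real (card A) * real m * (real (card R) - real m) + (real (card A) * real m)^2)"
proof -
  define N where "N = card R"
  define k where "k = card A"
  define C where "C = card R choose m"
  have S2: "(\<Sum>B\<in>ksub R m. real (card (B \<inter> A))^2) = real k * (real (c1 N m) + real (k - 1) * real (c2 N m))"
    using mom2[OF R A] unfolding k_def N_def by simp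
  have r1: "real N * real (c1 N m) = real m * real C"
    using c1_rel[of N m] unfolding C_def N_def by (metis of_nat_mult)
  have r2: "real (N - 1) * real (c2 N m) = real (m - 1) * real (c1 N m)"
    using c2_rel[of N m] by (metis of_nat_mult)
  have kN: "k \<le> N" unfolding k_def N_def using R A card_mono by blast
  show ?thesis
  proof (cases "k \<le> 1")
    case True
    then have "real (k - 1) = 0" by simp
    then have "real N ^2 * (\<Sum>B\<in>ksub R m. real (card (B \<inter> A))^2) = real k * real N * (real m * real C)"
      using S2 r1 by (simp add: power2_eq_square algebra_simps)
    also have "\<dots> = real C * (real k * real m * (real N - real m) + (real k * real m)^2)"
    proof -
      have "real k * real k = real k" using True by (cases k) auto
      then show ?thesis using True by (auto simp add: power2_eq_square algebra_simps)
    qed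
    finally show ?thesis unfolding N_def C_def k_def by simp
  next
    case False
    then have N2: "N \<ge> 2" using kN by simp
    have c2le: "real N ^2 * real (c2 N m) \<le> real m ^2 * real C"
    proof -
      have "(real N - 1) * (real N ^2 * real (c2 N m)) = real N * (real (m - 1) * (real N * real (c1 N m)))"
        using r2 N2 by (simp add: of_nat_diff power2_eq_square algebra_simps)
      also have "\<dots> = real N * real (m - 1) * real m * real C" using r1 by simp
      also have "\<dots> \<le> (real N - 1) * (real m ^2 * real C)"
      proof (cases "m = 0")
        case True then show ?thesis by simp
      next
        case False
        have "real (m - 1) = real m - 1" using False by (simp add: of_nat_diff)
        moreover have "real m \<le> real N" using mN unfolding N_def by simp
        moreover have "0 \<le> real C" by simp
        ultimately have "real N * (real m - 1) * real m \<le> (real N - 1) * real m ^2"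
          by (simp add: power2_eq_square algebra_simps mult_right_mono)
        then have "real N * (real m - 1) * real m * real C \<le> (real N - 1) * real m ^2 * real C"
          by (rule mult_right_mono) simp
        then show ?thesis using \<open>real (m - 1) = real m - 1\<close> by (simp add: algebra_simps)
      qed
      finally have "(real N - 1) * (real N ^2 * real (c2 N m)) \<le> (real N - 1) * (real m ^2 * real C)" .
      moreover have "real N - 1 > 0" using N2 by simp
      ultimately show ?thesis by simp
    qed
    have "real N ^2 * (\<Sum>B\<in>ksub R m. real (card (B \<inter> A))^2)
        = real k * real N * (real N * real (c1 N m)) + real k * real (k - 1) * (real N ^2 * real (c2 N m))"
      using S2 by (simp add: power2_eq_square algebra_simps)
    also have "\<dots> \<le> real k * real N * (real m * real C) + real k * real (k - 1) * (real m ^2 * real C)"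
      using r1 c2le by (simp add: mult_left_mono)
    also have "\<dots> = real C * (real k * real m * (real N - real m) + (real k * real m)^2)"
      using False by (simp add: of_nat_diff power2_eq_square algebra_simps)
    finally show ?thesis unfolding N_def C_def k_def by simp
  qed
qed

lemma var_bound:
  assumes R: "finite R" and A: "A \<subseteq> R" and mN: "m \<le> card R" and N0: "card R > 0"
  shows "(\<Sum>B\<in>ksub R m. (real (card (B \<inter> A)) - t)^2)
     \<le> real (card R choose m) * (real (card A) * real m * (real (card R) - real m) / real (card R)^2
          + (real (card A) * real m / real (card R) - t)^2)"
proof -
  define N where "N = real (card R)"
  define k where "k = real (card A)"
  define C where "C = real (card R choose m)"
  define S1 where "S1 = (\<Sum>B\<in>ksub R m. real (card (B \<inter> A)))"
  define S2 where "S2 = (\<Sum>B\<in>ksub R m. real (card (B \<inter> A))^2)"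
  have Npos: "N > 0" using N0 unfolding N_def by simp
  have "(\<Sum>B\<in>ksub R m. (real (card (B \<inter> A)) - t)^2) =
      (\<Sum>B\<in>ksub R m. real (card (B \<inter> A))^2 - 2 * t * real (card (B \<inter> A)) + t^2)"
    by (intro sum.cong refl) (simp add: power2_eq_square algebra_simps)
  also have "\<dots> = S2 - 2 * t * S1 + t^2 * C"
    unfolding S1_def S2_def C_def
    by (simp add: sum.distrib sum_subtractf sum_distrib_left card_ksub[OF R])
  finally have eq: "(\<Sum>B\<in>ksub R m. (real (card (B \<inter> A)) - t)^2) = S2 - 2 * t * S1 + t^2 * C" .
  have S1: "S1 = k * real m * C / N"
  proof -
    have "S1 = k * real (c1 (card R) m)" unfolding S1_def k_def using mom1[OF R A] by simp
    moreover have "N * real (c1 (card R) m) = real m * C"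
      using c1_rel[of "card R" m] unfolding N_def C_def by (metis of_nat_mult)
    ultimately show ?thesis using Npos by (simp add: field_simps)
  qed
  have S2: "N^2 * S2 \<le> C * (k * real m * (N - real m) + (k * real m)^2)"
    using key_S2[OF R A mN N0] unfolding N_def C_def k_def S2_def .
  have S2': "S2 \<le> C * (k * real m * (N - real m) / N^2 + (k * real m / N)^2)"
  proof -
    have "S2 \<le> C * (k * real m * (N - real m) + (k * real m)^2) / N^2"
      using S2 Npos by (subst pos_le_divide_eq) (auto simp: mult.commute)
    also have "\<dots> = C * (k * real m * (N - real m) / N^2 + (k * real m / N)^2)"
      using Npos by (simp add: field_simps power2_eq_square)
    finally show ?thesis .
  qed
  have "S2 - 2 * t * S1 + t^2 * C \<le> C * (k * real m * (N - real m) / N^2 + (k * real m / N)^2) - 2 * t * S1 + t^2 * C"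
    using S2' by simp
  also have "\<dots> = C * (k * real m * (N - real m) / N^2 + (k * real m / N - t)^2)"
    unfolding S1 using Npos by (simp add: field_simps power2_eq_square)
  finally show ?thesis using eq unfolding N_def k_def C_def by simp
qed

lemma fin_ineq:
  fixes p q k :: real
  assumes p: "p \<ge> 1" and q: "q \<ge> 1" and k: "k \<ge> 0"
  shows "q^2 * (p/(p+q)) * (k*(p-1)*q/(p+q-1)^2 + (k*(p-1)/(p+q-1) - k*p/(p+q))^2)
       + p^2 * (q/(p+q)) * (k*p*(q-1)/(p+q-1)^2 + (k*p/(p+q-1) - k*p/(p+q))^2)
       \<le> k^2 + 4*k*(p*q)^2/(p+q)^2"
proof -
  define r where "r = p + q"
  define a where "a = p + q - 1"
  have r2: "r \<ge> 2" and a1: "a \<ge> 1" and ra: "r = a + 1" using p q unfolding r_def a_def by auto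
  have rpos: "r > 0" and apos: "a > 0" using r2 a1 by auto
  have b1: "k*(p-1)/a - k*p/r = - (k*q/(r*a))"
    using rpos apos unfolding r_def a_def by (simp add: field_simps)
  have b2: "k*p/a - k*p/r = k*p/(r*a)"
    using rpos apos unfolding r_def a_def by (simp add: field_simps)
  have LHS: "q^2 * (p/r) * (k*(p-1)*q/a^2 + (k*(p-1)/a - k*p/r)^2)
       + p^2 * (q/r) * (k*p*(q-1)/a^2 + (k*p/a - k*p/r)^2)
     = (p*q*k/(r*a^2)) * (q^2*(p-1) + p^2*(q-1)) + (p*q*k^2*(q^3+p^3)) / (r^3*a^2)"
    unfolding b1 b2 using rpos apos by (simp add: field_simps power2_eq_square power3_eq_cube)
  have t1: "(p*q*k/(r*a^2)) * (q^2*(p-1) + p^2*(q-1)) \<le> 4*k*(p*q)^2/r^2"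
  proof -
    have "q^2*(p-1) + p^2*(q-1) \<le> p*q*r" unfolding r_def using p q
      by (simp add: power2_eq_square algebra_simps)
    moreover have "0 \<le> p*q*k/(r*a^2)" using p q k rpos apos by simp
    ultimately have "(p*q*k/(r*a^2)) * (q^2*(p-1) + p^2*(q-1)) \<le> (p*q*k/(r*a^2)) * (p*q*r)"
      by (rule mult_left_mono)
    also have "\<dots> = k*(p*q)^2/a^2" using rpos by (simp add: field_simps power2_eq_square)
    also have "\<dots> \<le> k*(p*q)^2/(r^2/4)"
    proof (rule divide_left_mono)
      have "r \<le> 2*a" using ra a1 by simp
      then have "r^2 \<le> (2*a)^2" using rpos by (intro power_mono) auto
      then show "r^2/4 \<le> a^2" by (simp add: power2_eq_square)
      show "0 \<le> k*(p*q)^2" using k by simp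
      show "0 < a^2 * (r^2/4)" using rpos apos by simp
    qed
    also have "\<dots> = 4*k*(p*q)^2/r^2" by simp
    finally show ?thesis .
  qed
  have t2: "(p*q*k^2*(q^3+p^3)) / (r^3*a^2) \<le> k^2"
  proof -
    have pq1: "1 \<le> p*q" using p q by (metis mult_mono' mult_1 zero_le_one order_trans)
    have "(p+q-1)^2 - p*q = (p-1)^2 + (q-1)^2 + (p*q - 1)" by (simp add: power2_eq_square algebra_simps)
    moreover have "0 \<le> (p-1)^2 + (q-1)^2 + (p*q - 1)" using pq1 by simp
    ultimately have pq: "p*q \<le> a^2" unfolding a_def by linarith
    have cub: "q^3+p^3 \<le> r^3" unfolding r_def using p q by (simp add: power3_eq_cube algebra_simps)
    have "p*q*(q^3+p^3) \<le> a^2 * r^3"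
      using pq cub p q by (intro mult_mono) auto
    then have "k^2 * (p*q*(q^3+p^3)) \<le> k^2 * (a^2 * r^3)" by (rule mult_left_mono) simp
    then show ?thesis using rpos apos by (simp add: divide_le_eq algebra_simps)
  qed
  show ?thesis using LHS t1 t2 unfolding r_def a_def by linarith
qed

lemma mean0:
  assumes R: "finite R" and A: "A \<subseteq> R" and cR: "card R = r" and r0: "r > 0"
  shows "(\<Sum>B\<in>ksub R p. real (card (B \<inter> A)) - real (card A) * real p / real r) = 0"
proof -
  have "real r * real (c1 r p) = real p * real (r choose p)"
    using c1_rel[of r p] by (metis of_nat_mult)
  then have c: "real (c1 r p) = real p * real (r choose p) / real r" using r0 by (simp add: field_simps)
  show ?thesis using mom1[OF R A] cR c
    by (simp add: sum_subtractf card_ksub[OF R])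
qed

lemma out_var:
  assumes R: "finite R" and A: "A \<subseteq> R" and cR: "card R = r" and pr: "p \<le> r" and r0: "r > 0"
  shows "(\<Sum>B\<in>ksub R p. (real (card (B \<inter> A)) - real (card A) * real p / real r)^2)
     \<le> real (r choose p) * (real (card A) * real p * (real r - real p) / real r ^2)"
  using var_bound[OF R A, of p "real (card A) * real p / real r"] cR pr r0 by simp

lemma s2_sum:
  assumes R: "finite R" and j0: "j0 \<in> R" and cR: "card R = p + q" and p0: "p > 0"
  shows "(\<Sum>B\<in>ksub R p. (if j0 \<in> B then real q else - real p)^2) = real ((p+q) choose p) * (real p * real q)"
proof -
  define r where "r = p + q"
  have r0: "r > 0" using p0 unfolding r_def by simp
  have "real r * real (c1 r p) = real p * real (r choose p)"
    using c1_rel[of r p] by (metis of_nat_mult)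
  then have c: "real (c1 r p) = real p * real (r choose p) / real r" using r0 by (simp add: field_simps)
  have "(\<Sum>B\<in>ksub R p. (if j0 \<in> B then real q else - real p)^2)
     = (\<Sum>B\<in>ksub R p. real p ^2 + (if j0 \<in> B then real q ^2 - real p ^2 else 0))"
    by (intro sum.cong refl) auto
  also have "\<dots> = real p^2 * real (r choose p) + (real q ^2 - real p ^2) * real (card {B\<in>ksub R p. j0 \<in> B})"
    using finite_ksub[OF R] card_ksub[OF R] cR unfolding r_def
    by (simp add: sum.distrib sum.inter_filter[symmetric])
  also have "\<dots> = real p^2 * real (r choose p) + (real q ^2 - real p ^2) * (real p * real (r choose p) / real r)"
    using cnt1[OF R j0] cR c unfolding r_def by simp
  also have "\<dots> = real (r choose p) * (real p * real q)"
  proof -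
    have rr: "real r = real p + real q" unfolding r_def by simp
    have "(real q ^2 - real p ^2) * (real p * real (r choose p) / real r) = (real q - real p) * real p * real (r choose p)"
    proof -
      have "real p + real q > 0" using r0 rr by linarith
      then show ?thesis unfolding rr by (simp add: field_simps power2_eq_square)
    qed
    then show ?thesis by (simp add: power2_eq_square algebra_simps)
  qed
  finally show ?thesis unfolding r_def .
qed

lemma split_j0:
  assumes R: "finite R" and j0: "j0 \<in> R" and p0: "p > 0"
  shows "(\<Sum>B\<in>ksub R p. h B) = (\<Sum>B\<in>ksub (R - {j0}) (p - 1). h (insert j0 B)) + (\<Sum>B\<in>ksub (R - {j0}) p. h B)"
proof -
  have fin: "finite (ksub R p)" using finite_ksub[OF R] .
  have "(\<Sum>B\<in>ksub R p. h B) = (\<Sum>B\<in>{B\<in>ksub R p. j0 \<in> B}. h B) + (\<Sum>B\<in>{B\<in>ksub R p. j0 \<notin> B}. h B)"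
  proof -
    have "ksub R p = {B\<in>ksub R p. j0 \<in> B} \<union> {B\<in>ksub R p. j0 \<notin> B}" by auto
    then show ?thesis using fin by (metis (no_types, lifting) sum.union_disjoint finite_Un disjoint_iff mem_Collect_eq)
  qed
  moreover have "{B\<in>ksub R p. j0 \<notin> B} = ksub (R - {j0}) p" unfolding ksub_def by auto
  moreover have "(\<Sum>B\<in>{B\<in>ksub R p. j0 \<in> B}. h B) = (\<Sum>B\<in>ksub (R - {j0}) (p - 1). h (insert j0 B))"
  proof -
    have inj: "inj_on (insert j0) (ksub (R - {j0}) (p - 1))"
      unfolding ksub_def inj_on_def by (metis Diff_insert_absorb insert_Diff_single insert_absorb mem_Collect_eq subset_Diff_insert)
    have img: "insert j0 ` ksub (R - {j0}) (p - 1) = {B\<in>ksub R p. j0 \<in> B}"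
    proof
      show "insert j0 ` ksub (R - {j0}) (p - 1) \<subseteq> {B \<in> ksub R p. j0 \<in> B}"
      proof
        fix B assume "B \<in> insert j0 ` ksub (R - {j0}) (p - 1)"
        then obtain C where C: "C \<subseteq> R - {j0}" "card C = p - 1" "B = insert j0 C" unfolding ksub_def by auto
        have "finite C" using C R finite_subset by blast
        moreover have "j0 \<notin> C" using C by auto
        ultimately have "card B = p" using C p0 by auto
        then show "B \<in> {B \<in> ksub R p. j0 \<in> B}" using C j0 unfolding ksub_def by auto
      qed
      show "{B \<in> ksub R p. j0 \<in> B} \<subseteq> insert j0 ` ksub (R - {j0}) (p - 1)"
      proof
        fix B assume B: "B \<in> {B \<in> ksub R p. j0 \<in> B}"
        then have "B = insert j0 (B - {j0})" by auto
        moreover have "B - {j0} \<in> ksub (R - {j0}) (p - 1)" using B R unfolding ksub_def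
          by (auto simp: card_Diff_singleton)
        ultimately show "B \<in> insert j0 ` ksub (R - {j0}) (p - 1)" by blast
      qed
    qed
    show ?thesis using sum.reindex[OF inj, of h] img by simp
  qed
  ultimately show ?thesis by simp
qed

lemma own_bound:
  assumes R: "finite R" and j0: "j0 \<in> R" and A: "A \<subseteq> R - {j0}" and cR: "card R = p + q"
    and p0: "p > 0" and q0: "q > 0"
  shows "(\<Sum>B\<in>ksub R p. (if j0 \<in> B then real q else - real p)^2 *
            (real (card (B \<inter> A)) - real (card A) * real p / real (p+q))^2)
     \<le> real ((p+q) choose p) * (real (card A)^2 + 4 * real (card A) * (real p * real q)^2 / real (p+q)^2)"
proof -
  define r where "r = p + q"
  define k where "k = real (card A)"
  define t where "t = k * real p / real r"
  define Cp where "Cp = real (r choose p)"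
  define h where "h = (\<lambda>B. (if j0 \<in> B then real q else - real p)^2 * (real (card (B \<inter> A)) - t)^2)"
  have R': "finite (R - {j0})" using R by simp
  have cR': "card (R - {j0}) = r - 1" using cR j0 R unfolding r_def by simp
  have r2: "r \<ge> 2" using p0 q0 unfolding r_def by simp
  have ins: "h (insert j0 B) = real q ^2 * (real (card (B \<inter> A)) - t)^2" if "B \<subseteq> R - {j0}" for B
  proof -
    have "insert j0 B \<inter> A = B \<inter> A" using A by auto
    then show ?thesis unfolding h_def by simp
  qed
  have nins: "h B = real p ^2 * (real (card (B \<inter> A)) - t)^2" if "B \<in> ksub (R - {j0}) p" for B
    using that unfolding h_def ksub_def by auto
  have "(\<Sum>B\<in>ksub R p. h B) = (\<Sum>B\<in>ksub (R - {j0}) (p - 1). h (insert j0 B)) + (\<Sum>B\<in>ksub (R - {j0}) p. h B)"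
    by (rule split_j0[OF R j0 p0])
  also have "\<dots> = real q^2 * (\<Sum>B\<in>ksub (R - {j0}) (p - 1). (real (card (B \<inter> A)) - t)^2)
      + real p^2 * (\<Sum>B\<in>ksub (R - {j0}) p. (real (card (B \<inter> A)) - t)^2)"
    using ins nins by (simp add: sum_distrib_left ksub_def)
  also have "\<dots> \<le> real q^2 * (real ((r-1) choose (p-1)) * (k * real (p-1) * (real (r-1) - real (p-1)) / real (r-1)^2
          + (k * real (p-1) / real (r-1) - t)^2))
      + real p^2 * (real ((r-1) choose p) * (k * real p * (real (r-1) - real p) / real (r-1)^2
          + (k * real p / real (r-1) - t)^2))"
  proof (rule add_mono; rule mult_left_mono)
    show "(\<Sum>B\<in>ksub (R - {j0}) (p - 1). (real (card (B \<inter> A)) - t)^2) \<le> real ((r-1) choose (p-1)) * (k * real (p-1) * (real (r-1) - real (p-1)) / real (r-1)^2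
          + (k * real (p-1) / real (r-1) - t)^2)"
      using var_bound[OF R' A, of "p-1" t] cR' r2 unfolding k_def r_def by simp
    show "(\<Sum>B\<in>ksub (R - {j0}) p. (real (card (B \<inter> A)) - t)^2) \<le> real ((r-1) choose p) * (k * real p * (real (r-1) - real p) / real (r-1)^2
          + (k * real p / real (r-1) - t)^2)"
      using var_bound[OF R' A, of "p" t] cR' r2 q0 unfolding k_def r_def by simp
  qed simp_all
  also have "\<dots> = Cp * (real q^2 * (real p / real r) * (k*(real p-1)*real q/(real p+real q-1)^2 + (k*(real p-1)/(real p+real q-1) - k*real p/(real p+real q))^2)
       + real p^2 * (real q/real r) * (k*real p*(real q-1)/(real p+real q-1)^2 + (k*real p/(real p+real q-1) - k*real p/(real p+real q))^2))"
  proof -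
    have e1: "real ((r-1) choose (p-1)) = real p * Cp / real r"
    proof -
      have "real r * real (c1 r p) = real p * Cp"
        using c1_rel[of r p] unfolding Cp_def by (metis of_nat_mult)
      then show ?thesis using r2 p0 unfolding c1_def by (simp add: field_simps)
    qed
    have e2: "real ((r-1) choose p) = real q * Cp / real r"
    proof -
      have "(r - p) * (r choose p) = r * ((r - 1) choose p)" by (rule binomial_absorb_comp)
      then have "real q * Cp = real r * real ((r-1) choose p)" unfolding Cp_def r_def by (metis of_nat_mult add_diff_cancel_left')
      then show ?thesis using r2 by (simp add: field_simps)
    qed
    have cv: "real (r-1) = real p + real q - 1" "real (p-1) = real p - 1" "real r = real p + real q"
      using r2 p0 unfolding r_def by (auto simp: of_nat_diff)
    show ?thesis unfolding e1 e2 t_def cv by (simp add: field_simps)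
  qed
  also have "\<dots> \<le> Cp * (k^2 + 4*k*(real p*real q)^2/(real p+real q)^2)"
  proof (rule mult_left_mono)
    show "0 \<le> Cp" unfolding Cp_def by simp
    have "k \<ge> 0" unfolding k_def by simp
    then show "real q^2 * (real p / real r) * (k*(real p-1)*real q/(real p+real q-1)^2 + (k*(real p-1)/(real p+real q-1) - k*real p/(real p+real q))^2)
       + real p^2 * (real q/real r) * (k*real p*(real q-1)/(real p+real q-1)^2 + (k*real p/(real p+real q-1) - k*real p/(real p+real q))^2)
       \<le> k^2 + 4*k*(real p*real q)^2/(real p+real q)^2"
      using fin_ineq[of "real p" "real q" k] p0 q0 unfolding r_def by simp
  qed
  finally show ?thesis unfolding h_def t_def Cp_def k_def r_def by simp
qed

lemma prod_one_point:
  assumes "finite I" "a \<in> I"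
  shows "(\<Prod>l\<in>I. if l = a then X else (C::real)) = X * C ^ (card I - 1)"
proof -
  have "(\<Prod>l\<in>I. if l = a then X else C) = X * (\<Prod>l\<in>I - {a}. if l = a then X else C)"
    using assms by (simp add: prod.remove)
  also have "(\<Prod>l\<in>I - {a}. if l = a then X else C) = (\<Prod>l\<in>I - {a}. C)" by (intro prod.cong) auto
  finally show ?thesis using assms by simp
qed

lemma prod_two_point:
  assumes "finite I" "a \<in> I" "b \<in> I" "a \<noteq> b"
  shows "(\<Prod>l\<in>I. if l = a then X else if l = b then Y else (C::real)) = X * Y * C ^ (card I - 2)"
proof -
  have "(\<Prod>l\<in>I. if l = a then X else if l = b then Y else C) = X * (\<Prod>l\<in>I - {a}. if l = a then X else if l = b then Y else C)"
    using assms by (simp add: prod.remove)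
  also have "(\<Prod>l\<in>I - {a}. if l = a then X else if l = b then Y else C) = (\<Prod>l\<in>I - {a}. if l = b then Y else C)"
    by (intro prod.cong) auto
  also have "\<dots> = Y * C ^ (card (I - {a}) - 1)" using assms by (intro prod_one_point) auto
  finally show ?thesis using assms by (simp add: numeral_2_eq_2 diff_diff_add mult.assoc)
qed

lemma E_prod:
  fixes F :: "nat \<Rightarrow> 'a \<Rightarrow> real"
  assumes "finite S"
  shows "(\<Sum>B\<in>PiE {..<n} (\<lambda>_. S). \<Prod>l<n. F l (B l)) = (\<Prod>l<n. \<Sum>x\<in>S. F l x)"
  using prod_sum_PiE[of "{..<n}" "\<lambda>_. S" F] assms by simp

lemma Q2_bound:
  fixes R :: "nat set" and A :: "nat \<Rightarrow> nat set"
  assumes R: "finite R" and cR: "card R = p + q" and p0: "p > 0" and q0: "q > 0"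
    and i0: "i0 < n" and j0: "j0 \<in> R" and AR: "\<And>i. i < n \<Longrightarrow> A i \<subseteq> R" and A0: "A i0 \<subseteq> R - {j0}"
  defines "s \<equiv> \<lambda>x. if j0 \<in> x then real q else - real p"
    and "Y \<equiv> \<lambda>i x. real (card (x \<inter> A i)) - real (card (A i)) * real p / real (p+q)"
  shows "(\<Sum>B\<in>PiE {..<n} (\<lambda>_. ksub R p). (s (B i0) * (\<Sum>i<n. Y i (B i)))^2) / real (card (PiE {..<n} (\<lambda>_. ksub R p)))
     \<le> real (card (A i0))^2 + 4 * (real p * real q)^2 / real (p+q)^2 * (\<Sum>i<n. real (card (A i)))"
proof -
  define r where "r = p + q"
  define S where "S = ksub R p"
  define Om where "Om = PiE {..<n} (\<lambda>_. S)"
  define Cp where "Cp = real (r choose p)"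
  have finS: "finite S" unfolding S_def using finite_ksub[OF R] .
  have cardS: "card S = r choose p" unfolding S_def r_def using card_ksub[OF R] cR by simp
  have Cp0: "Cp > 0" unfolding Cp_def r_def by simp
  have cOm: "real (card Om) = Cp ^ n" unfolding Om_def Cp_def using cardS by (simp add: card_PiE)
  define e where "e = (\<lambda>i j. (\<Sum>B\<in>Om. s (B i0)^2 * Y i (B i) * Y j (B j)))"
  have expand: "(\<Sum>B\<in>Om. (s (B i0) * (\<Sum>i<n. Y i (B i)))^2) = (\<Sum>i<n. \<Sum>j<n. e i j)"
  proof -
    have "(s (B i0) * (\<Sum>i<n. Y i (B i)))^2 = (\<Sum>i<n. \<Sum>j<n. s (B i0)^2 * Y i (B i) * Y j (B j))" for B
    proof -
      have "(s (B i0) * (\<Sum>i<n. Y i (B i)))^2 = s (B i0)^2 * ((\<Sum>i<n. Y i (B i)) * (\<Sum>j<n. Y j (B j)))"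
        by (simp add: power2_eq_square)
      also have "(\<Sum>i<n. Y i (B i)) * (\<Sum>j<n. Y j (B j)) = (\<Sum>i<n. \<Sum>j<n. Y i (B i) * Y j (B j))"
        by (rule sum_product)
      finally show ?thesis by (simp add: sum_distrib_left mult.assoc)
    qed
    then have "(\<Sum>B\<in>Om. (s (B i0) * (\<Sum>i<n. Y i (B i)))^2) = (\<Sum>B\<in>Om. \<Sum>i<n. \<Sum>j<n. s (B i0)^2 * Y i (B i) * Y j (B j))"
      by simp
    also have "\<dots> = (\<Sum>i<n. \<Sum>B\<in>Om. \<Sum>j<n. s (B i0)^2 * Y i (B i) * Y j (B j))" by (rule sum.swap)
    also have "\<dots> = (\<Sum>i<n. \<Sum>j<n. e i j)" unfolding e_def by (intro sum.cong refl sum.swap)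
    finally show ?thesis .
  qed
  have eprod: "e i j = (\<Prod>l<n. \<Sum>x\<in>S. (if l = i0 then s x^2 else 1) * (if l = i then Y i x else 1) * (if l = j then Y j x else 1))"
    if "i < n" "j < n" for i j
  proof -
    have "e i j = (\<Sum>B\<in>Om. \<Prod>l<n. (if l = i0 then s (B l)^2 else 1) * (if l = i then Y i (B l) else 1) * (if l = j then Y j (B l) else 1))"
      unfolding e_def using that i0 by (intro sum.cong refl) (simp add: prod.distrib prod.delta)
    also have "\<dots> = (\<Prod>l<n. \<Sum>x\<in>S. (if l = i0 then s x^2 else 1) * (if l = i then Y i x else 1) * (if l = j then Y j x else 1))"
      unfolding Om_def by (rule E_prod[OF finS])
    finally show ?thesis .
  qed
  have meanY: "(\<Sum>x\<in>S. Y i x) = 0" if "i < n" for i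
    unfolding S_def Y_def using mean0[OF R AR[OF that] cR] p0 by simp
  have sumone: "(\<Sum>x\<in>S. (1::real)) = Cp" unfolding Cp_def using cardS by simp
  have eoff: "e i j = 0" if ij: "i < n" "j < n" "i \<noteq> j" for i j
  proof -
    obtain l where l: "l < n" "l \<noteq> i0" "l = i \<or> l = j" using ij by blast
    have z: "(\<Sum>x\<in>S. (if l = i0 then s x^2 else 1) * (if l = i then Y i x else 1) * (if l = j then Y j x else 1)) = 0"
      using l ij meanY by auto
    show ?thesis unfolding eprod[OF ij(1,2)]
      apply (rule prod_zero)
       apply simp
      apply (rule bexI[where x=l])
      using z l by auto
  qed
  have ediag0: "e i0 i0 / Cp ^ n \<le> real (card (A i0))^2 + 4 * real (card (A i0)) * (real p * real q)^2 / real r^2"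
  proof -
    have "e i0 i0 = (\<Prod>l<n. if l = i0 then (\<Sum>x\<in>S. s x^2 * Y i0 x * Y i0 x) else Cp)"
      unfolding eprod[OF i0 i0] using sumone by (intro prod.cong refl) auto
    also have "\<dots> = (\<Sum>x\<in>S. s x^2 * Y i0 x * Y i0 x) * Cp ^ (n - 1)"
      using i0 by (simp add: prod_one_point)
    moreover have "Cp ^ n = Cp ^ (n - 1) * Cp" using i0 by (cases n) auto
    ultimately have ee: "e i0 i0 / Cp ^ n = (\<Sum>x\<in>S. s x^2 * Y i0 x * Y i0 x) / Cp"
      using Cp0 by simp
    have "(\<Sum>x\<in>S. s x^2 * Y i0 x * Y i0 x) \<le> Cp * (real (card (A i0))^2 + 4 * real (card (A i0)) * (real p * real q)^2 / real r^2)"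
      using own_bound[OF R j0 A0 cR p0 q0] unfolding S_def s_def Y_def Cp_def r_def
      by (simp add: power2_eq_square mult.assoc)
    then show ?thesis unfolding ee using Cp0 by (simp add: divide_le_eq mult.commute)
  qed
  have ediag: "e i i / Cp ^ n \<le> (real p * real q)^2 / real r^2 * real (card (A i))" if "i < n" "i \<noteq> i0" for i
  proof -
    have "e i i = (\<Prod>l<n. if l = i0 then (\<Sum>x\<in>S. s x^2) else if l = i then (\<Sum>x\<in>S. Y i x * Y i x) else Cp)"
      unfolding eprod[OF that(1) that(1)] using sumone that by (intro prod.cong refl) auto
    also have "\<dots> = (\<Sum>x\<in>S. s x^2) * (\<Sum>x\<in>S. Y i x * Y i x) * Cp ^ (n - 2)"
      using prod_two_point[of "{..<n}" i0 i "\<Sum>x\<in>S. s x^2" "\<Sum>x\<in>S. Y i x * Y i x" Cp] i0 that by simp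
    finally have ee: "e i i / Cp ^ n = (\<Sum>x\<in>S. s x^2) / Cp * ((\<Sum>x\<in>S. Y i x * Y i x) / Cp)"
    proof -
      assume h: "e i i = (\<Sum>x\<in>S. s x^2) * (\<Sum>x\<in>S. Y i x * Y i x) * Cp ^ (n - 2)"
      have "n \<ge> 2" using that i0 by linarith
      then have "Cp ^ n = Cp ^ (n - 2) * Cp * Cp" by (metis power_add power2_eq_square le_add_diff_inverse2 mult.assoc)
      then show ?thesis using h Cp0 by (simp add: field_simps)
    qed
    have s2: "(\<Sum>x\<in>S. s x^2) / Cp = real p * real q"
      using s2_sum[OF R j0 cR p0] Cp0 unfolding S_def s_def Cp_def r_def by simp
    have y2: "(\<Sum>x\<in>S. Y i x * Y i x) / Cp \<le> real (card (A i)) * real p * real q / real r ^2"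
    proof -
      have "(\<Sum>x\<in>S. Y i x * Y i x) \<le> Cp * (real (card (A i)) * real p * (real r - real p) / real r ^2)"
        using out_var[OF R AR[OF that(1)] cR, of p] p0 unfolding S_def Y_def Cp_def r_def
        by (simp add: power2_eq_square)
      moreover have "real r - real p = real q" unfolding r_def by simp
      ultimately show ?thesis using Cp0 by (simp add: divide_le_eq mult.commute)
    qed
    have "e i i / Cp ^ n \<le> real p * real q * (real (card (A i)) * real p * real q / real r ^2)"
      unfolding ee s2 using y2 by (intro mult_left_mono) auto
    then show ?thesis by (simp add: power2_eq_square algebra_simps)
  qed
  have "(\<Sum>B\<in>Om. (s (B i0) * (\<Sum>i<n. Y i (B i)))^2) / real (card Om) = (\<Sum>i<n. \<Sum>j<n. e i j) / Cp ^ n"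
    using expand cOm by simp
  also have "(\<Sum>i<n. \<Sum>j<n. e i j) = (\<Sum>i<n. e i i)"
  proof (intro sum.cong refl)
    fix i assume "i \<in> {..<n}"
    then have "(\<Sum>j<n. e i j) = (\<Sum>j<n. if j = i then e i i else 0)" using eoff by (intro sum.cong refl) auto
    also have "\<dots> = e i i" using \<open>i \<in> {..<n}\<close> by simp
    finally show "(\<Sum>j<n. e i j) = e i i" .
  qed
  also have "(\<Sum>i<n. e i i) / Cp ^ n = e i0 i0 / Cp ^ n + (\<Sum>i\<in>{..<n} - {i0}. e i i / Cp ^ n)"
    using i0 by (simp add: sum.remove add_divide_distrib sum_divide_distrib)
  also have "\<dots> \<le> (real (card (A i0))^2 + 4 * real (card (A i0)) * (real p * real q)^2 / real r^2)
      + (\<Sum>i\<in>{..<n} - {i0}. (real p * real q)^2 / real r^2 * real (card (A i)))"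
    using ediag0 ediag by (intro add_mono sum_mono) auto
  also have "\<dots> \<le> real (card (A i0))^2 + 4 * (real p * real q)^2 / real r^2 * (\<Sum>i<n. real (card (A i)))"
  proof -
    define c where "c = (real p * real q)^2 / real r^2"
    have c0: "c \<ge> 0" unfolding c_def by simp
    have "(\<Sum>i\<in>{..<n} - {i0}. c * real (card (A i))) \<le> (\<Sum>i\<in>{..<n} - {i0}. 4 * c * real (card (A i)))"
      using c0 by (intro sum_mono) auto
    moreover have "4 * c * (\<Sum>i<n. real (card (A i))) = 4 * c * real (card (A i0)) + (\<Sum>i\<in>{..<n} - {i0}. 4 * c * real (card (A i)))"
      using i0 by (simp add: sum.remove distrib_left sum_distrib_left[symmetric])
    ultimately show ?thesis unfolding c_def by (simp add: algebra_simps)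
  qed
  finally show ?thesis unfolding Om_def S_def r_def by simp
qed

lemma lip_sum:
  fixes s g x :: "'a \<Rightarrow> real"
  assumes P: "finite P" and s0: "(\<Sum>v\<in>P. s v) = 0" and K: "K \<ge> 0"
    and lip: "\<And>v v'. v \<in> P \<Longrightarrow> v' \<in> P \<Longrightarrow> \<bar>g v - g v'\<bar> \<le> K * \<bar>x v - x v'\<bar>"
  shows "\<bar>\<Sum>v\<in>P. s v * g v\<bar> \<le> K * (\<Sum>v\<in>P. \<bar>s v\<bar> * \<bar>x v - c\<bar>)"
proof (cases "P = {}")
  case True then show ?thesis by simp
next
  case False
  define h where "h = (\<lambda>v. g v + K * \<bar>x v - c\<bar>)"
  define C where "C = Min (h ` P)"
  have Cle: "C \<le> h v" if "v \<in> P" for v unfolding C_def using P that by simp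
  have "C \<in> h ` P" unfolding C_def using P False by (intro Min_in) auto
  then obtain v0 where v0: "v0 \<in> P" "C = h v0" by auto
  have gC: "\<bar>g v - C\<bar> \<le> K * \<bar>x v - c\<bar>" if v: "v \<in> P" for v
  proof -
    have a: "C - g v \<le> K * \<bar>x v - c\<bar>" using Cle[OF v] unfolding h_def by simp
    have "g v - g v0 \<le> K * \<bar>x v - x v0\<bar>" using lip[OF v v0(1)] by simp
    also have "\<dots> \<le> K * (\<bar>x v - c\<bar> + \<bar>x v0 - c\<bar>)" using K by (intro mult_left_mono) auto
    finally have b: "g v - C \<le> K * \<bar>x v - c\<bar>" using v0(2) unfolding h_def by (simp add: algebra_simps)
    show ?thesis using a b by simp
  qed
  have "(\<Sum>v\<in>P. s v * (g v - C)) = (\<Sum>v\<in>P. s v * g v) - (\<Sum>v\<in>P. s v) * C"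
    by (simp add: right_diff_distrib sum_subtractf sum_distrib_right)
  then have "(\<Sum>v\<in>P. s v * g v) = (\<Sum>v\<in>P. s v * (g v - C))" using s0 by simp
  then have "\<bar>\<Sum>v\<in>P. s v * g v\<bar> \<le> (\<Sum>v\<in>P. \<bar>s v * (g v - C)\<bar>)" by (simp add: sum_abs)
  also have "\<dots> \<le> (\<Sum>v\<in>P. \<bar>s v\<bar> * (K * \<bar>x v - c\<bar>))"
    using gC by (intro sum_mono) (simp add: abs_mult mult_left_mono)
  also have "\<dots> = K * (\<Sum>v\<in>P. \<bar>s v\<bar> * \<bar>x v - c\<bar>)" by (simp add: sum_distrib_left algebra_simps)
  finally show ?thesis .
qed

definition fracv :: "'v set \<Rightarrow> ('v \<Rightarrow> 'v \<Rightarrow> bool) \<Rightarrow> 'v set \<Rightarrow> 'v \<Rightarrow> real" where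
  "fracv V E T v = real (card (T \<inter> nbr V E v)) / real (deg V E v)"

lemma nbr_sub: "nbr V E v \<subseteq> V" unfolding nbr_def by auto

lemma dvec_sum:
  assumes "finite V"
  shows "fst (dvec V E T v) + snd (dvec V E T v) = deg V E v"
proof -
  have f: "finite (nbr V E v)" using assms nbr_sub by (rule finite_subset[rotated])
  have "card (nbr V E v) = card (nbr V E v \<inter> T) + card (nbr V E v - T)" by (rule card_Int_Diff[OF f])
  moreover have "nbr V E v \<inter> T = T \<inter> nbr V E v" by blast
  ultimately show ?thesis unfolding dvec_def deg_def by simp
qed

lemma fr_dvec:
  assumes "finite V"
  shows "real (fst (dvec V E T v)) / (real (fst (dvec V E T v)) + real (snd (dvec V E T v))) = fracv V E T v"
proof -
  have e1: "fst (dvec V E T v) = card (T \<inter> nbr V E v)" unfolding dvec_def by simp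
  have e2: "real (fst (dvec V E T v)) + real (snd (dvec V E T v)) = real (deg V E v)"
    using dvec_sum[OF assms, of E T v] by (metis of_nat_add)
  show ?thesis by (simp only: e2) (simp add: fracv_def e1)
qed

lemma wdist_dvec:
  assumes "finite V"
  shows "wdist K (dvec V E T v) (dvec V E T v') = K * \<bar>fracv V E T v - fracv V E T v'\<bar>"
  unfolding wdist_def fr_dvec[OF assms] ..

lemma dvec_in_Bset:
  assumes "finite V" "v \<in> \<pi>"
  shows "dvec V E T v \<in> Bset V E \<pi>"
proof -
  obtain a b where ab: "dvec V E T v = (a, b)" by (cases "dvec V E T v")
  then have "a + b = deg V E v" using dvec_sum[OF assms(1), of E T v] by simp
  then show ?thesis unfolding Bset_def ab using assms(2) by blast
qed

lemma finite_Bset: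
  assumes "finite V" "\<pi> \<subseteq> V"
  shows "finite (Bset V E \<pi>)"
proof -
  have "Bset V E \<pi> \<subseteq> {..card V} \<times> {..card V}"
  proof
    fix u assume "u \<in> Bset V E \<pi>"
    then obtain a b v where u: "u = (a, b)" "v \<in> \<pi>" "a + b = deg V E v" unfolding Bset_def by auto
    have "card (nbr V E v) \<le> card V" using assms(1) nbr_sub by (rule card_mono)
    then have "deg V E v \<le> card V" unfolding deg_def .
    then show "u \<in> {..card V} \<times> {..card V}" using u by auto
  qed
  then show ?thesis by (rule finite_subset) simp
qed

lemma D_reindex:
  assumes V: "finite V" and pi: "\<pi> \<subseteq> V"
  shows "(\<Sum>u\<in>Bset V E \<pi>. g u * Dpi V E p q n \<pi> T u)
     = 1 / (real p * real q * real n) * (\<Sum>v\<in>\<pi>. sgnT p q T v * g (dvec V E T v))"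
proof -
  have fpi: "finite \<pi>" using V pi finite_subset by blast
  have "(\<Sum>u\<in>Bset V E \<pi>. g u * Dpi V E p q n \<pi> T u)
      = 1 / (real p * real q * real n) * (\<Sum>u\<in>Bset V E \<pi>. \<Sum>v\<in>{v \<in> \<pi>. dvec V E T v = u}. sgnT p q T v * g (dvec V E T v))"
  proof -
    have "g u * Dpi V E p q n \<pi> T u = 1 / (real p * real q * real n) * (\<Sum>v\<in>{v \<in> \<pi>. dvec V E T v = u}. sgnT p q T v * g (dvec V E T v))" for u
    proof -
      have "(\<Sum>v\<in>{v \<in> \<pi>. dvec V E T v = u}. sgnT p q T v * g (dvec V E T v)) = (\<Sum>v\<in>{v \<in> \<pi>. dvec V E T v = u}. sgnT p q T v * g u)"
        by (intro sum.cong) auto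
      also have "\<dots> = (\<Sum>v\<in>{v \<in> \<pi>. dvec V E T v = u}. sgnT p q T v) * g u" by (rule sum_distrib_right[symmetric])
      finally show ?thesis unfolding Dpi_def by simp
    qed
    then show ?thesis by (simp add: sum_distrib_left)
  qed
  also have "(\<Sum>u\<in>Bset V E \<pi>. \<Sum>v\<in>{v \<in> \<pi>. dvec V E T v = u}. sgnT p q T v * g (dvec V E T v))
      = (\<Sum>v\<in>\<pi>. sgnT p q T v * g (dvec V E T v))"
    by (rule sum.group[OF fpi finite_Bset[OF V pi], where g="dvec V E T" and h="\<lambda>v. sgnT p q T v * g (dvec V E T v)"])
      (use dvec_in_Bset[OF V] in blast)
  finally show ?thesis .
qed

lemma part_bound:
  fixes g :: "nat \<times> nat \<Rightarrow> real"
  assumes V: "finite V" and pi: "\<pi> \<subseteq> V" and s0: "(\<Sum>v\<in>\<pi>. sgnT p q T v) = 0" and K: "K \<ge> 0"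
    and lip: "\<forall>u\<in>Bset V E \<pi>. \<forall>u'\<in>Bset V E \<pi>. \<bar>g u - g u'\<bar> \<le> wdist K u u'"
  shows "\<bar>1 / (real p * real q * real n) * (\<Sum>v\<in>\<pi>. sgnT p q T v * g (dvec V E T v))\<bar>
     \<le> K / (real p * real q * real n) * (\<Sum>v\<in>\<pi>. \<bar>sgnT p q T v\<bar> * \<bar>fracv V E T v - c\<bar>)"
proof -
  have fpi: "finite \<pi>" using V pi finite_subset by blast
  have "\<bar>\<Sum>v\<in>\<pi>. sgnT p q T v * g (dvec V E T v)\<bar> \<le> K * (\<Sum>v\<in>\<pi>. \<bar>sgnT p q T v\<bar> * \<bar>fracv V E T v - c\<bar>)"
  proof (rule lip_sum[OF fpi s0 K])
    fix v v' assume "v \<in> \<pi>" "v' \<in> \<pi>"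
    then have "dvec V E T v \<in> Bset V E \<pi>" "dvec V E T v' \<in> Bset V E \<pi>" using dvec_in_Bset[OF V] by auto
    then have "\<bar>g (dvec V E T v) - g (dvec V E T v')\<bar> \<le> wdist K (dvec V E T v) (dvec V E T v')" using lip by blast
    then show "\<bar>g (dvec V E T v) - g (dvec V E T v')\<bar> \<le> K * \<bar>fracv V E T v - fracv V E T v'\<bar>"
      using wdist_dvec[OF V] by simp
  qed
  then show ?thesis by (simp add: abs_mult divide_right_mono)
qed

lemma wnorm_bound:
  assumes V: "finite V" and pi: "\<pi> \<subseteq> V" and s0: "(\<Sum>v\<in>\<pi>. sgnT p q T v) = 0" and K: "K \<ge> 0"
  shows "wnorm V E K \<pi> (Dpi V E p q n \<pi> T)
          \<le> K / (real p * real q * real n) * (\<Sum>v\<in>\<pi>. \<bar>sgnT p q T v\<bar> * \<bar>fracv V E T v - c\<bar>)"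
    and "0 \<le> wnorm V E K \<pi> (Dpi V E p q n \<pi> T)"
proof -
  define M where "M = K / (real p * real q * real n) * (\<Sum>v\<in>\<pi>. \<bar>sgnT p q T v\<bar> * \<bar>fracv V E T v - c\<bar>)"
  define SS where "SS = {\<bar>\<Sum>u\<in>Bset V E \<pi>. g u * Dpi V E p q n \<pi> T u\<bar> | g :: nat \<times> nat \<Rightarrow> real.
            \<forall>u\<in>Bset V E \<pi>. \<forall>u'\<in>Bset V E \<pi>. \<bar>g u - g u'\<bar> \<le> wdist K u u'}"
  have ub: "y \<le> M" if "y \<in> SS" for y
  proof -
    obtain g :: "nat \<times> nat \<Rightarrow> real" where g: "y = \<bar>\<Sum>u\<in>Bset V E \<pi>. g u * Dpi V E p q n \<pi> T u\<bar>"
      "\<forall>u\<in>Bset V E \<pi>. \<forall>u'\<in>Bset V E \<pi>. \<bar>g u - g u'\<bar> \<le> wdist K u u'"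
      using \<open>y \<in> SS\<close> unfolding SS_def by blast
    show ?thesis unfolding g(1) D_reindex[OF V pi] M_def by (rule part_bound[OF V pi s0 K g(2)])
  qed
  have zero: "0 \<in> SS"
    unfolding SS_def using K by (intro CollectI exI[where x="\<lambda>_. 0::real"]) (auto simp: wdist_def)
  have w: "wnorm V E K \<pi> (Dpi V E p q n \<pi> T) = Sup SS" unfolding wnorm_def SS_def by simp
  show "wnorm V E K \<pi> (Dpi V E p q n \<pi> T) \<le> M" unfolding w
    using zero ub by (intro cSup_least) auto
  show "0 \<le> wnorm V E K \<pi> (Dpi V E p q n \<pi> T)" unfolding w
    using zero ub by (intro cSup_upper) (auto simp: bdd_above_def)
qed

lemma L2_sum_le:
  assumes "finite I"
  shows "L2_set (\<lambda>B. \<Sum>v\<in>I. Z v B) Om \<le> (\<Sum>v\<in>I. L2_set (Z v) Om)"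
  using assms
proof (induction I rule: finite_induct)
  case empty
  then show ?case by (simp add: L2_set_0')
next
  case (insert a I)
  have "L2_set (\<lambda>B. \<Sum>v\<in>insert a I. Z v B) Om = L2_set (\<lambda>B. Z a B + (\<Sum>v\<in>I. Z v B)) Om"
    using insert by simp
  also have "\<dots> \<le> L2_set (Z a) Om + L2_set (\<lambda>B. \<Sum>v\<in>I. Z v B) Om" by (rule L2_set_triangle_ineq)
  also have "\<dots> \<le> L2_set (Z a) Om + (\<Sum>v\<in>I. L2_set (Z v) Om)" using insert by simp
  finally show ?case using insert by simp
qed

lemma sqrt_avg_L2:
  "sqrt ((\<Sum>B\<in>Om. (F B)^2) / real (card Om)) = L2_set F Om / sqrt (real (card Om))"
  unfolding L2_set_def by (simp add: real_sqrt_divide)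

lemma mink_avg:
  assumes "finite I"
  shows "sqrt ((\<Sum>B\<in>Om. (\<Sum>v\<in>I. Z v B)^2) / real (card Om))
      \<le> (\<Sum>v\<in>I. sqrt ((\<Sum>B\<in>Om. (Z v B)^2) / real (card Om)))"
proof -
  have "L2_set (\<lambda>B. \<Sum>v\<in>I. Z v B) Om / sqrt (real (card Om)) \<le> (\<Sum>v\<in>I. L2_set (Z v) Om) / sqrt (real (card Om))"
    using L2_sum_le[OF assms] by (rule divide_right_mono) simp
  then show ?thesis unfolding sqrt_avg_L2 by (simp add: sum_divide_distrib)
qed

lemma vertex_real:
  fixes Ev k a d :: real
  assumes d: "d > 0" and k: "k \<ge> 0" and a: "a \<ge> 0" and E: "Ev \<le> k^2 + 4 * a^2 * d"
  shows "sqrt (Ev / d^2) \<le> 4 * a / sqrt d + k / d"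
proof -
  have sd: "sqrt d > 0" using d by simp
  have sdd: "sqrt d * sqrt d = d" using d by simp
  have ex: "(k + 2 * a * sqrt d)^2 = k^2 + 4 * a * k * sqrt d + 4 * a^2 * (sqrt d * sqrt d)"
    by (simp add: power2_eq_square algebra_simps)
  have "0 \<le> 4 * a * k * sqrt d" using k a sd by simp
  then have "k^2 + 4 * a^2 * d \<le> (k + 2 * a * sqrt d)^2" unfolding ex sdd by linarith
  then have "Ev \<le> (k + 2 * a * sqrt d)^2" using E by linarith
  then have "sqrt Ev \<le> k + 2 * a * sqrt d"
    using k a sd real_sqrt_le_mono by (metis abs_of_nonneg real_sqrt_abs le_add_same_cancel1 mult_nonneg_nonneg zero_le_numeral add_nonneg_nonneg order.strict_implies_order)
  then have "sqrt Ev / d \<le> (k + 2 * a * sqrt d) / d" using d by (simp add: divide_right_mono)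
  also have "\<dots> = k / d + 2 * a / sqrt d"
  proof -
    have "sqrt d / d = 1 / sqrt d" using sd sdd by (simp add: field_simps)
    then show ?thesis by (simp add: add_divide_distrib) (metis times_divide_eq_right mult.assoc mult_1_right)
  qed
  also have "\<dots> \<le> 4 * a / sqrt d + k / d" using a sd by (simp add: divide_right_mono)
  finally show ?thesis using d by (simp add: real_sqrt_divide)
qed

lemma rr_space_ksub: "rr_space n p r = PiE {..<n} (\<lambda>_. ksub {1..r} p)"
  unfolding rr_space_def ksub_def by simp

lemma rrT_mem:
  assumes bij: "bij_betw (\<lambda>(i, j). w i j) ({..<n} \<times> {1..r}) V"
    and B: "B \<in> rr_space n p r" and i: "i < n" and j: "j \<in> {1..r}"
  shows "w i j \<in> rr_T w n B \<longleftrightarrow> j \<in> B i"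
proof
  assume "j \<in> B i" then show "w i j \<in> rr_T w n B" unfolding rr_T_def using i by blast
next
  assume "w i j \<in> rr_T w n B"
  then obtain i' j' where ij: "w i j = w i' j'" "i' < n" "j' \<in> B i'" unfolding rr_T_def by blast
  have "B i' \<subseteq> {1..r}" using B ij(2) unfolding rr_space_def by auto
  then have "j' \<in> {1..r}" using ij by auto
  have inj: "inj_on (\<lambda>(i, j). w i j) ({..<n} \<times> {1..r})" using bij by (rule bij_betw_imp_inj_on)
  have "(i, j) = (i', j')" using inj_onD[OF inj, of "(i,j)" "(i',j')"] ij i j \<open>j' \<in> {1..r}\<close> by auto
  then show "j \<in> B i" using ij by simp
qed

lemma rrT_sub:
  assumes bij: "bij_betw (\<lambda>(i, j). w i j) ({..<n} \<times> {1..r}) V"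
    and B: "B \<in> rr_space n p r"
  shows "rr_T w n B \<subseteq> V"
proof
  fix x assume "x \<in> rr_T w n B"
  then obtain i j where ij: "x = w i j" "i < n" "j \<in> B i" unfolding rr_T_def by blast
  have "B i \<subseteq> {1..r}" using B ij(2) unfolding rr_space_def by auto
  then have "(i, j) \<in> {..<n} \<times> {1..r}" using ij by auto
  then show "x \<in> V" using bij_betw_imp_surj_on[OF bij] ij(1) by force
qed

lemma sgn_sum0:
  assumes bij: "bij_betw (\<lambda>(i, j). w i j) ({..<n} \<times> {1..r}) V"
    and B: "B \<in> rr_space n p r" and r: "r = p + q"
    and part: "partition_on V Parts" and pi: "\<pi> \<in> Parts"
    and blocks: "\<forall>i<n. \<exists>\<pi>\<in>Parts. w i ` {1..r} \<subseteq> \<pi>"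
  shows "(\<Sum>v\<in>\<pi>. sgnT p q (rr_T w n B) v) = 0"
proof -
  define R where "R = {1..r}"
  define I where "I = {i. i < n \<and> w i ` R \<subseteq> \<pi>}"
  define W where "W = (\<lambda>(i, j). w i j)"
  have inj: "inj_on W ({..<n} \<times> R)" using bij unfolding W_def R_def by (rule bij_betw_imp_inj_on)
  have img: "W ` ({..<n} \<times> R) = V" using bij unfolding W_def R_def by (rule bij_betw_imp_surj_on)
  have disj: "disjoint Parts" using part by (rule partition_onD2)
  have piV: "\<pi> \<subseteq> V" using part pi unfolding partition_on_def by auto
  have pi_eq: "\<pi> = W ` (I \<times> R)"
  proof
    show "\<pi> \<subseteq> W ` (I \<times> R)"
    proof
      fix v assume v: "v \<in> \<pi>"
      then have "v \<in> V" using piV by auto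
      then obtain i j where ij: "i < n" "j \<in> R" "v = w i j" using img unfolding W_def by auto
      obtain \<pi>' where \<pi>': "\<pi>' \<in> Parts" "w i ` R \<subseteq> \<pi>'" using blocks ij(1) unfolding R_def by auto
      have "v \<in> \<pi>'" using \<pi>' ij by auto
      then have "\<pi>' = \<pi>" using disj \<pi>'(1) pi v unfolding disjoint_def by blast
      then have "i \<in> I" using \<pi>' ij unfolding I_def by auto
      then show "v \<in> W ` (I \<times> R)" using ij unfolding W_def by force
    qed
    show "W ` (I \<times> R) \<subseteq> \<pi>" unfolding I_def W_def by auto
  qed
  have injI: "inj_on W (I \<times> R)" using inj by (rule inj_on_subset) (auto simp: I_def)
  have "(\<Sum>v\<in>\<pi>. sgnT p q (rr_T w n B) v) = (\<Sum>x\<in>I \<times> R. sgnT p q (rr_T w n B) (W x))"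
    unfolding pi_eq by (rule sum.reindex[OF injI, unfolded comp_def])
  also have "\<dots> = (\<Sum>i\<in>I. \<Sum>j\<in>R. sgnT p q (rr_T w n B) (w i j))"
    unfolding W_def by (simp add: sum.cartesian_product case_prod_beta')
  also have "\<dots> = (\<Sum>i\<in>I. 0)"
  proof (rule sum.cong[OF refl])
    fix i assume "i \<in> I"
    then have i: "i < n" unfolding I_def by auto
    have Bi: "B i \<subseteq> R" "card (B i) = p" using B i unfolding rr_space_def R_def by auto
    have "(\<Sum>j\<in>R. sgnT p q (rr_T w n B) (w i j)) = (\<Sum>j\<in>R. (if j \<in> B i then real r else 0) - real p)"
      using rrT_mem[OF bij B i] r unfolding sgnT_def R_def by (intro sum.cong refl) auto
    also have "\<dots> = real r * real (card (R \<inter> {j. j \<in> B i})) - real p * real r"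
    proof -
      have "finite R" "card R = r" unfolding R_def by auto
      then show ?thesis by (simp add: sum_subtractf sum.If_cases)
    qed
    also have "R \<inter> {j. j \<in> B i} = B i" using Bi by auto
    finally show "(\<Sum>j\<in>R. sgnT p q (rr_T w n B) (w i j)) = 0" using Bi by simp
  qed
  finally show ?thesis by simp
qed

lemma vertex_struct:
  assumes bij: "bij_betw (\<lambda>(i, j). w i j) ({..<n} \<times> {1..r}) V"
    and irr: "\<forall>v. \<not> E v v" and v: "v \<in> V"
  obtains i0 j0 A where "i0 < n" "j0 \<in> {1..r}" "v = w i0 j0"
    "\<forall>i. A i \<subseteq> {1..r}" "A i0 \<subseteq> {1..r} - {j0}"
    "deg V E v = (\<Sum>i<n. card (A i))"
    "card (block_of w r n v \<inter> nbr V E v) = card (A i0)"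
    "\<forall>B\<in>rr_space n p r. card (rr_T w n B \<inter> nbr V E v) = (\<Sum>i<n. card (B i \<inter> A i))"
    "\<forall>B\<in>rr_space n p r. sgnT p q (rr_T w n B) v = (if j0 \<in> B i0 then real q else - real p)"
proof -
  define R where "R = {1..r}"
  define W where "W = (\<lambda>(i, j). w i j)"
  have inj: "inj_on W ({..<n} \<times> R)" using bij unfolding W_def R_def by (rule bij_betw_imp_inj_on)
  have img: "W ` ({..<n} \<times> R) = V" using bij unfolding W_def R_def by (rule bij_betw_imp_surj_on)
  obtain i0 j0 where ij0: "i0 < n" "j0 \<in> R" "v = w i0 j0" using v img unfolding W_def by auto
  define A where "A = (\<lambda>i. {j\<in>R. E v (w i j)})"
  have AR: "\<forall>i. A i \<subseteq> R" unfolding A_def by auto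
  have A0: "A i0 \<subseteq> R - {j0}" using irr ij0 unfolding A_def by auto
  have fSig: "finite (Sigma {..<n} F)" if "\<And>i. F i \<subseteq> R" for F
    by (rule finite_SigmaI) (auto intro: finite_subset[OF that] simp: R_def)
  have cardSig: "card (W ` Sigma {..<n} F) = (\<Sum>i<n. card (F i))" if F: "\<And>i. F i \<subseteq> R" for F
  proof -
    have "inj_on W (Sigma {..<n} F)" using F by (intro inj_on_subset[OF inj]) auto
    then have "card (W ` Sigma {..<n} F) = card (Sigma {..<n} F)" by (rule card_image)
    also have "\<dots> = (\<Sum>i<n. card (F i))"
      by (rule card_SigmaI) (auto intro: finite_subset[OF F] simp: R_def)
    finally show ?thesis .
  qed
  have nbr: "nbr V E v = W ` Sigma {..<n} A"
  proof
    show "nbr V E v \<subseteq> W ` Sigma {..<n} A"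
    proof
      fix u assume u: "u \<in> nbr V E v"
      then have "u \<in> V" "E v u" unfolding nbr_def by auto
      then obtain i j where "i < n" "j \<in> R" "u = w i j" using img unfolding W_def by auto
      then show "u \<in> W ` Sigma {..<n} A" using \<open>E v u\<close> unfolding A_def W_def by force
    qed
    show "W ` Sigma {..<n} A \<subseteq> nbr V E v"
    proof
      fix u assume "u \<in> W ` Sigma {..<n} A"
      then obtain i j where ij: "i < n" "j \<in> A i" "u = w i j" unfolding W_def by auto
      then have "(i, j) \<in> {..<n} \<times> R" using AR by auto
      then have "u \<in> V" using img ij unfolding W_def by force
      then show "u \<in> nbr V E v" using ij unfolding A_def nbr_def by auto
    qed
  qed
  have deg: "deg V E v = (\<Sum>i<n. card (A i))" unfolding deg_def nbr using cardSig AR by auto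
  have blk: "block_of w r n v = w i0 ` R"
  proof -
    have "{w i ` {1..r} | i. i < n \<and> v \<in> w i ` {1..r}} = {w i0 ` R}"
    proof
      show "{w i ` {1..r} | i. i < n \<and> v \<in> w i ` {1..r}} \<subseteq> {w i0 ` R}"
      proof
        fix X assume "X \<in> {w i ` {1..r} | i. i < n \<and> v \<in> w i ` {1..r}}"
        then obtain i j where X: "X = w i ` R" "i < n" "j \<in> R" "v = w i j" unfolding R_def by auto
        have "(i, j) = (i0, j0)" using inj_onD[OF inj, of "(i,j)" "(i0,j0)"] X ij0 unfolding W_def by auto
        then show "X \<in> {w i0 ` R}" using X by auto
      qed
      show "{w i0 ` R} \<subseteq> {w i ` {1..r} | i. i < n \<and> v \<in> w i ` {1..r}}"
        using ij0 unfolding R_def by auto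
    qed
    then show ?thesis unfolding block_of_def by simp
  qed
  have blkc: "card (block_of w r n v \<inter> nbr V E v) = card (A i0)"
  proof -
    have "block_of w r n v \<inter> nbr V E v = W ` Sigma {..<n} (\<lambda>i. if i = i0 then A i0 else {})"
    proof
      show "block_of w r n v \<inter> nbr V E v \<subseteq> W ` Sigma {..<n} (\<lambda>i. if i = i0 then A i0 else {})"
      proof
        fix u assume "u \<in> block_of w r n v \<inter> nbr V E v"
        then obtain j where j: "j \<in> R" "u = w i0 j" "u \<in> W ` Sigma {..<n} A" unfolding blk nbr by auto
        then obtain i' j' where ij': "i' < n" "j' \<in> A i'" "u = w i' j'" unfolding W_def by auto
        have "(i0, j) = (i', j')" using inj_onD[OF inj, of "(i0,j)" "(i',j')"] j ij' ij0 AR unfolding W_def by auto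
        then have mem: "(i0, j) \<in> Sigma {..<n} (\<lambda>i. if i = i0 then A i0 else {})" using ij' ij0 by auto
        show "u \<in> W ` Sigma {..<n} (\<lambda>i. if i = i0 then A i0 else {})"
          by (rule image_eqI[where x="(i0,j)"]) (use mem j in \<open>auto simp: W_def\<close>)
      qed
      show "W ` Sigma {..<n} (\<lambda>i. if i = i0 then A i0 else {}) \<subseteq> block_of w r n v \<inter> nbr V E v"
        unfolding blk nbr W_def using AR ij0 by (force split: if_splits)
    qed
    moreover have "(\<Sum>i<n. card (if i = i0 then A i0 else {})) = card (A i0)"
      using ij0 by (simp add: if_distrib cong: if_cong)
    ultimately show ?thesis using cardSig[of "\<lambda>i. if i = i0 then A i0 else {}"] AR by auto
  qed
  have Tn: "card (rr_T w n B \<inter> nbr V E v) = (\<Sum>i<n. card (B i \<inter> A i))" if B: "B \<in> rr_space n p r" for B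
  proof -
    have BR: "B i \<subseteq> R" if "i < n" for i using B that unfolding rr_space_def R_def by auto
    have "rr_T w n B \<inter> nbr V E v = W ` Sigma {..<n} (\<lambda>i. B i \<inter> A i)"
    proof
      show "rr_T w n B \<inter> nbr V E v \<subseteq> W ` Sigma {..<n} (\<lambda>i. B i \<inter> A i)"
      proof
        fix u assume "u \<in> rr_T w n B \<inter> nbr V E v"
        then obtain i j where ij: "i < n" "j \<in> A i" "u = w i j" "u \<in> rr_T w n B" unfolding nbr W_def by auto
        have "j \<in> {1..r}" using ij(2) AR unfolding R_def by blast
        then have "j \<in> B i" using rrT_mem[OF bij B ij(1), of j] ij by auto
        then show "u \<in> W ` Sigma {..<n} (\<lambda>i. B i \<inter> A i)" using ij unfolding W_def by force
      qed
      show "W ` Sigma {..<n} (\<lambda>i. B i \<inter> A i) \<subseteq> rr_T w n B \<inter> nbr V E v"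
        unfolding nbr W_def rr_T_def by auto
    qed
    moreover have "(\<lambda>i. B i \<inter> A i) i \<subseteq> R" for i using AR by auto
    ultimately show ?thesis using cardSig[of "\<lambda>i. B i \<inter> A i"] by auto
  qed
  have sg: "sgnT p q (rr_T w n B) v = (if j0 \<in> B i0 then real q else - real p)" if B: "B \<in> rr_space n p r" for B
    using rrT_mem[OF bij B ij0(1)] ij0 unfolding sgnT_def R_def by simp
  show ?thesis
    using that[of i0 j0 A] ij0 AR A0 deg blkc Tn sg unfolding R_def by blast
qed

lemma vertex_bound:
  assumes bij: "bij_betw (\<lambda>(i, j). w i j) ({..<n} \<times> {1..r}) V"
    and irr: "\<forall>v. \<not> E v v" and v: "v \<in> V" and dpos: "deg V E v > 0"
    and p0: "p > 0" and q0: "q > 0" and r: "r = p + q"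
  shows "sqrt (rr_expect n p r (\<lambda>B. (\<bar>sgnT p q (rr_T w n B) v\<bar> * \<bar>fracv V E (rr_T w n B) v - real p / real r\<bar>)^2))
    \<le> 4 * (real p * real q / real r) / sqrt (real (deg V E v)) + real (card (block_of w r n v \<inter> nbr V E v)) / real (deg V E v)"
proof -
  obtain i0 j0 A where st: "i0 < n" "j0 \<in> {1..r}" "v = w i0 j0"
    "\<forall>i. A i \<subseteq> {1..r}" "A i0 \<subseteq> {1..r} - {j0}"
    "deg V E v = (\<Sum>i<n. card (A i))"
    "card (block_of w r n v \<inter> nbr V E v) = card (A i0)"
    "\<forall>B\<in>rr_space n p r. card (rr_T w n B \<inter> nbr V E v) = (\<Sum>i<n. card (B i \<inter> A i))"
    "\<forall>B\<in>rr_space n p r. sgnT p q (rr_T w n B) v = (if j0 \<in> B i0 then real q else - real p)"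
    using vertex_struct[where w=w and n=n and r=r and V=V and E=E and v=v and p=p and q=q, OF bij irr v] by blast
  define s where "s = (\<lambda>x. if j0 \<in> x then real q else - real p)"
  define Y where "Y = (\<lambda>i x. real (card (x \<inter> A i)) - real (card (A i)) * real p / real (p+q))"
  define d where "d = real (deg V E v)"
  define Om where "Om = PiE {..<n} (\<lambda>_. ksub {1..r} p)"
  have d0: "d > 0" using dpos unfolding d_def by simp
  have dsum: "d = (\<Sum>i<n. real (card (A i)))" unfolding d_def st(6) by simp
  have pt: "(\<bar>sgnT p q (rr_T w n B) v\<bar> * \<bar>fracv V E (rr_T w n B) v - real p / real r\<bar>)^2
      = (s (B i0) * (\<Sum>i<n. Y i (B i)))^2 / d^2" if B: "B \<in> rr_space n p r" for B
  proof -
    have "fracv V E (rr_T w n B) v = (\<Sum>i<n. real (card (B i \<inter> A i))) / d"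
      unfolding fracv_def d_def using st(8) B by simp
    moreover have "(\<Sum>i<n. Y i (B i)) = (\<Sum>i<n. real (card (B i \<inter> A i))) - d * real p / real r"
      unfolding Y_def dsum r by (simp add: sum_subtractf sum_distrib_right sum_divide_distrib)
    ultimately have X: "fracv V E (rr_T w n B) v - real p / real r = (\<Sum>i<n. Y i (B i)) / d"
      using d0 by (simp add: field_simps)
    have sg: "sgnT p q (rr_T w n B) v = s (B i0)" using st(9) B unfolding s_def by simp
    have "(\<bar>sgnT p q (rr_T w n B) v\<bar> * \<bar>fracv V E (rr_T w n B) v - real p / real r\<bar>)^2
        = (s (B i0) * ((\<Sum>i<n. Y i (B i)) / d))^2" unfolding X sg abs_mult[symmetric] power2_abs ..
    also have "\<dots> = (s (B i0) * (\<Sum>i<n. Y i (B i)))^2 / d^2" by (simp add: power_divide)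
    finally show ?thesis .
  qed
  have Om: "rr_space n p r = Om" unfolding Om_def by (rule rr_space_ksub)
  have "rr_expect n p r (\<lambda>B. (\<bar>sgnT p q (rr_T w n B) v\<bar> * \<bar>fracv V E (rr_T w n B) v - real p / real r\<bar>)^2)
      = ((\<Sum>B\<in>Om. (s (B i0) * (\<Sum>i<n. Y i (B i)))^2) / real (card Om)) / d^2"
    unfolding rr_expect_def using pt Om by (simp add: sum_divide_distrib mult.commute)
  also have "\<dots> \<le> (real (card (A i0))^2 + 4 * (real p * real q / real r)^2 * d) / d^2"
  proof (rule divide_right_mono)
    have "(\<Sum>B\<in>Om. (s (B i0) * (\<Sum>i<n. Y i (B i)))^2) / real (card Om)
       \<le> real (card (A i0))^2 + 4 * (real p * real q)^2 / real (p+q)^2 * (\<Sum>i<n. real (card (A i)))"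
      unfolding Om_def s_def Y_def
      by (rule Q2_bound[where R="{1..r}"]) (use st p0 q0 r in auto)
    then show "(\<Sum>B\<in>Om. (s (B i0) * (\<Sum>i<n. Y i (B i)))^2) / real (card Om)
       \<le> real (card (A i0))^2 + 4 * (real p * real q / real r)^2 * d"
      unfolding dsum r by (simp add: power_divide)
  qed simp
  finally have E: "rr_expect n p r (\<lambda>B. (\<bar>sgnT p q (rr_T w n B) v\<bar> * \<bar>fracv V E (rr_T w n B) v - real p / real r\<bar>)^2)
      \<le> (real (card (A i0))^2 + 4 * (real p * real q / real r)^2 * d) / d^2" .
  define Ev where "Ev = rr_expect n p r (\<lambda>B. (\<bar>sgnT p q (rr_T w n B) v\<bar> * \<bar>fracv V E (rr_T w n B) v - real p / real r\<bar>)^2) * d^2"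
  have Ev: "Ev \<le> real (card (A i0))^2 + 4 * (real p * real q / real r)^2 * d"
    using E d0 unfolding Ev_def by (simp add: le_divide_eq)
  have "sqrt (Ev / d^2) \<le> 4 * (real p * real q / real r) / sqrt d + real (card (A i0)) / d"
    by (rule vertex_real[OF d0 _ _ Ev]) auto
  moreover have "Ev / d^2 = rr_expect n p r (\<lambda>B. (\<bar>sgnT p q (rr_T w n B) v\<bar> * \<bar>fracv V E (rr_T w n B) v - real p / real r\<bar>)^2)"
    unfolding Ev_def using d0 by simp
  ultimately show ?thesis unfolding d_def st(7) by simp
qed

lemma rr_expect_mono:
  assumes "\<And>B. B \<in> rr_space n p r \<Longrightarrow> f B \<le> g B"
  shows "rr_expect n p r f \<le> rr_expect n p r g"
  unfolding rr_expect_def using assms by (intro divide_right_mono sum_mono) auto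

theorem mainTheorem7:
  fixes V :: "'v set" and E :: "'v \<Rightarrow> 'v \<Rightarrow> bool"
    and n p q r :: nat and K :: real
    and Parts :: "'v set set" and f :: "'v set \<Rightarrow> nat \<times> nat \<Rightarrow> real"
    and w :: "nat \<Rightarrow> nat \<Rightarrow> 'v"
  assumes n_pos: "n > 0" and p_pos: "p > 0" and q_pos: "q > 0" and r_def: "r = p + q"
    and finV: "finite V"
    and E_sym: "\<forall>u v. E u v \<longrightarrow> E v u" and E_irrefl: "\<forall>v. \<not> E v v"
    and cardV: "card V = r * n"
    and no_isolated: "\<forall>v\<in>V. deg V E v > 0"
    and Pi_part: "partition_on V Parts"
    and Pi_div: "\<forall>\<pi>\<in>Parts. r dvd card \<pi>"
    and f_empty: "\<forall>v\<in>V. f (part_of Parts v) (0, deg V E v) = 0"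
    and K_pos: "K > 0"
    and w_bij: "bij_betw (\<lambda>(i, j). w i j) ({..<n} \<times> {1..r}) V"
    and blocks_in_parts: "\<forall>i<n. \<exists>\<pi>\<in>Parts. w i ` {1..r} \<subseteq> \<pi>"
  shows "sqrt (rr_expect n p r
            (\<lambda>B. (\<Sum>\<pi>\<in>Parts. wnorm V E K \<pi> (Dpi V E p q n \<pi> (rr_T w n B))) ^ 2))
         \<le> 1 / (real r * real n) * (\<Sum>v\<in>V. 4 * K / sqrt (real (deg V E v)))
           + K / (real p * real q * real n) *
               (\<Sum>v\<in>V. real (card (block_of w r n v \<inter> nbr V E v)) / real (deg V E v))
       \<and> ((\<forall>\<pi>\<in>Parts. \<forall>u\<in>Bset V E \<pi>. \<forall>u'\<in>Bset V E \<pi>. \<bar>f \<pi> u - f \<pi> u'\<bar> \<le> wdist K u u')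
          \<longrightarrow> sqrt (rr_expect n p r (\<lambda>B. (xi V E Parts f p q n (rr_T w n B)) ^ 2))
              \<le> 1 / (real r * real n) * (\<Sum>v\<in>V. 4 * K / sqrt (real (deg V E v)))
                + K / (real p * real q * real n) *
                    (\<Sum>v\<in>V. real (card (block_of w r n v \<inter> nbr V E v)) / real (deg V E v)))"
proof -
  define c where "c = K / (real p * real q * real n)"
  define X where "X = (\<lambda>v B. \<bar>sgnT p q (rr_T w n B) v\<bar> * \<bar>fracv V E (rr_T w n B) v - real p / real r\<bar>)"
  define Phi where "Phi = (\<lambda>B. \<Sum>v\<in>V. c * X v B)"
  define RHS where "RHS = 1 / (real r * real n) * (\<Sum>v\<in>V. 4 * K / sqrt (real (deg V E v)))
           + K / (real p * real q * real n) *
               (\<Sum>v\<in>V. real (card (block_of w r n v \<inter> nbr V E v)) / real (deg V E v))"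
  have K0: "K \<ge> 0" using K_pos by simp
  have c0: "c \<ge> 0" unfolding c_def using K0 by simp
  have finParts: "finite Parts"
    using Pi_part finV unfolding partition_on_def by (metis Sup_upper finite_UnionD)
  have partsub: "\<pi> \<subseteq> V" if "\<pi> \<in> Parts" for \<pi> using Pi_part that unfolding partition_on_def by auto
  have disj: "disjoint Parts" using Pi_part by (rule partition_onD2)
  have sumParts: "(\<Sum>\<pi>\<in>Parts. \<Sum>v\<in>\<pi>. h v) = (\<Sum>v\<in>V. h v)" for h :: "'v \<Rightarrow> real"
  proof -
    have "(\<Sum>v\<in>\<Union>Parts. h v) = (sum \<circ> sum) h Parts"
      by (rule sum.Union_disjoint)
        (use partsub finV finite_subset disj in \<open>meson, auto simp: disjoint_def\<close>)
    moreover have "\<Union>Parts = V" using Pi_part unfolding partition_on_def by auto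
    ultimately show ?thesis by (simp add: comp_def)
  qed
  have Phi_eq: "Phi B = (\<Sum>\<pi>\<in>Parts. c * (\<Sum>v\<in>\<pi>. X v B))" for B
    unfolding Phi_def sumParts[symmetric] by (simp add: sum_distrib_left)
  have s0: "(\<Sum>v\<in>\<pi>. sgnT p q (rr_T w n B) v) = 0" if "B \<in> rr_space n p r" "\<pi> \<in> Parts" for B \<pi>
    by (rule sgn_sum0[OF w_bij that(1) r_def Pi_part that(2) blocks_in_parts])
  have W_bound: "0 \<le> (\<Sum>\<pi>\<in>Parts. wnorm V E K \<pi> (Dpi V E p q n \<pi> (rr_T w n B))) \<and>
      (\<Sum>\<pi>\<in>Parts. wnorm V E K \<pi> (Dpi V E p q n \<pi> (rr_T w n B))) \<le> Phi B"
    if B: "B \<in> rr_space n p r" for B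
  proof
    show "0 \<le> (\<Sum>\<pi>\<in>Parts. wnorm V E K \<pi> (Dpi V E p q n \<pi> (rr_T w n B)))"
      using wnorm_bound(2)[OF finV partsub s0[OF B] K0] by (intro sum_nonneg) auto
    show "(\<Sum>\<pi>\<in>Parts. wnorm V E K \<pi> (Dpi V E p q n \<pi> (rr_T w n B))) \<le> Phi B"
      unfolding Phi_eq c_def X_def
      using wnorm_bound(1)[OF finV partsub s0[OF B] K0] by (intro sum_mono) auto
  qed
  have main: "sqrt (rr_expect n p r (\<lambda>B. (Phi B)^2)) \<le> RHS"
  proof -
    have "sqrt (rr_expect n p r (\<lambda>B. (Phi B)^2)) \<le> (\<Sum>v\<in>V. sqrt (rr_expect n p r (\<lambda>B. (c * X v B)^2)))"
      unfolding rr_expect_def Phi_def by (rule mink_avg[OF finV])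
    also have "\<dots> = (\<Sum>v\<in>V. c * sqrt (rr_expect n p r (\<lambda>B. (X v B)^2)))"
    proof (rule sum.cong[OF refl])
      fix v
      have "rr_expect n p r (\<lambda>B. (c * X v B)^2) = c^2 * rr_expect n p r (\<lambda>B. (X v B)^2)"
        unfolding rr_expect_def by (simp add: power_mult_distrib sum_distrib_left)
      then show "sqrt (rr_expect n p r (\<lambda>B. (c * X v B)^2)) = c * sqrt (rr_expect n p r (\<lambda>B. (X v B)^2))"
        using c0 by (simp add: real_sqrt_mult)
    qed
    also have "\<dots> \<le> (\<Sum>v\<in>V. c * (4 * (real p * real q / real r) / sqrt (real (deg V E v))
        + real (card (block_of w r n v \<inter> nbr V E v)) / real (deg V E v)))"
    proof (rule sum_mono)
      fix v assume v: "v \<in> V"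
      show "c * sqrt (rr_expect n p r (\<lambda>B. (X v B)^2)) \<le> c * (4 * (real p * real q / real r) / sqrt (real (deg V E v))
        + real (card (block_of w r n v \<inter> nbr V E v)) / real (deg V E v))"
        unfolding X_def
        by (rule mult_left_mono[OF vertex_bound[where w=w and n=n and r=r and V=V and E=E and v=v and p=p and q=q, OF w_bij E_irrefl v _ p_pos q_pos r_def] c0])
          (use no_isolated v in auto)
    qed
    also have "\<dots> = RHS"
    proof -
      have "c * (4 * (real p * real q / real r) / sqrt (real (deg V E v))) = 1 / (real r * real n) * (4 * K / sqrt (real (deg V E v)))" for v
        unfolding c_def using p_pos q_pos n_pos by (simp add: field_simps)
      then show ?thesis unfolding RHS_def c_def
        by (simp add: distrib_left sum.distrib sum_distrib_left)
    qed
    finally show ?thesis .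
  qed
  have part1: "sqrt (rr_expect n p r
            (\<lambda>B. (\<Sum>\<pi>\<in>Parts. wnorm V E K \<pi> (Dpi V E p q n \<pi> (rr_T w n B))) ^ 2)) \<le> RHS"
  proof -
    have "rr_expect n p r (\<lambda>B. (\<Sum>\<pi>\<in>Parts. wnorm V E K \<pi> (Dpi V E p q n \<pi> (rr_T w n B))) ^ 2)
        \<le> rr_expect n p r (\<lambda>B. (Phi B)^2)"
      using W_bound by (intro rr_expect_mono power_mono) auto
    then show ?thesis using main real_sqrt_le_mono order_trans by blast
  qed
  have part2: "sqrt (rr_expect n p r (\<lambda>B. (xi V E Parts f p q n (rr_T w n B)) ^ 2)) \<le> RHS"
    if lip: "\<forall>\<pi>\<in>Parts. \<forall>u\<in>Bset V E \<pi>. \<forall>u'\<in>Bset V E \<pi>. \<bar>f \<pi> u - f \<pi> u'\<bar> \<le> wdist K u u'"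
  proof -
    have pof: "part_of Parts v = \<pi>" if "\<pi> \<in> Parts" "v \<in> \<pi>" for v \<pi>
      unfolding part_of_def
    proof (rule the_equality)
      show "\<pi> \<in> Parts \<and> v \<in> \<pi>" using that by simp
      fix \<pi>' assume "\<pi>' \<in> Parts \<and> v \<in> \<pi>'"
      then show "\<pi>' = \<pi>" using disj that unfolding disjoint_def by blast
    qed
    have xib: "\<bar>xi V E Parts f p q n (rr_T w n B)\<bar> \<le> Phi B" if B: "B \<in> rr_space n p r" for B
    proof -
      define T where "T = rr_T w n B"
      have "xi V E Parts f p q n T = 1 / (real p * real q * real n) *
          (\<Sum>v\<in>V. sgnT p q T v * f (part_of Parts v) (dvec V E T v))"
        unfolding xi_def dvec_def ..
      also have "\<dots> = (\<Sum>\<pi>\<in>Parts. 1 / (real p * real q * real n) * (\<Sum>v\<in>\<pi>. sgnT p q T v * f \<pi> (dvec V E T v)))"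
      proof -
        have "(\<Sum>\<pi>\<in>Parts. \<Sum>v\<in>\<pi>. sgnT p q T v * f (part_of Parts v) (dvec V E T v))
            = (\<Sum>\<pi>\<in>Parts. \<Sum>v\<in>\<pi>. sgnT p q T v * f \<pi> (dvec V E T v))"
          using pof by (intro sum.cong refl) auto
        then show ?thesis unfolding sumParts[symmetric] by (simp add: sum_distrib_left)
      qed
      finally have xe: "xi V E Parts f p q n T = (\<Sum>\<pi>\<in>Parts. 1 / (real p * real q * real n) * (\<Sum>v\<in>\<pi>. sgnT p q T v * f \<pi> (dvec V E T v)))" .
      have "\<bar>xi V E Parts f p q n T\<bar> \<le> (\<Sum>\<pi>\<in>Parts. \<bar>1 / (real p * real q * real n) * (\<Sum>v\<in>\<pi>. sgnT p q T v * f \<pi> (dvec V E T v))\<bar>)"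
        unfolding xe by (rule sum_abs)
      also have "\<dots> \<le> (\<Sum>\<pi>\<in>Parts. c * (\<Sum>v\<in>\<pi>. X v B))"
      proof (rule sum_mono)
        fix \<pi> assume pi: "\<pi> \<in> Parts"
        show "\<bar>1 / (real p * real q * real n) * (\<Sum>v\<in>\<pi>. sgnT p q T v * f \<pi> (dvec V E T v))\<bar> \<le> c * (\<Sum>v\<in>\<pi>. X v B)"
          unfolding c_def X_def T_def
          by (rule part_bound[OF finV partsub[OF pi] s0[OF B pi] K0]) (use lip pi in blast)
      qed
      finally show ?thesis unfolding T_def Phi_eq .
    qed
    have "rr_expect n p r (\<lambda>B. (xi V E Parts f p q n (rr_T w n B)) ^ 2) \<le> rr_expect n p r (\<lambda>B. (Phi B)^2)"
    proof (rule rr_expect_mono)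
      fix B assume "B \<in> rr_space n p r"
      then have "\<bar>xi V E Parts f p q n (rr_T w n B)\<bar> \<le> Phi B" by (rule xib)
      then have "\<bar>xi V E Parts f p q n (rr_T w n B)\<bar>^2 \<le> (Phi B)^2" by (intro power_mono) auto
      then show "(xi V E Parts f p q n (rr_T w n B))^2 \<le> (Phi B)^2" by simp
    qed
    then show ?thesis using main real_sqrt_le_mono order_trans by blast
  qed
  show ?thesis using part1 part2 unfolding RHS_def by blast
qed

end
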